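(* Let $n\ge m\ge0$ and consider the multiplication map $$\mu:\mathbb{Z}_p[x]^1_m\times P_1^{n-m}\to B_{m,n}:=\{f\in\mathbb{Z}_p[x]_n:\ \overline f \text{ is monic of degree } m\},\qquad (g,h)\mapsto gh.$$ (a) $\mu$ is a measure-preserving bijection. (b) Let $r$ be an integer with $m\le r\le n$. Replace $B_{m,n}$ by its subset of those $f$ with $p^rf(x/p)\in\mathbb{Z}_p[x]$ and $p^rf(x/p)\equiv x^n\pmod p$, and replace $P_1^{n-m}$ by its subset of those $h$ with $p^{r-m}h(x/p)\in\mathbb{Z}_p[x]$ and $p^{r-m}h(x/p)\equiv x^{n-m}\pmod p$. Then $\mu$ restricts to a measure-preserving bijection between $\mathbb{Z}_p[x]^1_m\times(\text{this subset of }P_1^{n-m})$ and this subset of $B_{m,n}$.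
   Context: $\mathbb{Z}_p[x]_n$ is the set of polynomials over $\mathbb{Z}_p$ of degree at most $n$, identified with $\mathbb{Z}_p^{n+1}$ via coefficients; $\mathbb{Z}_p[x]^1_m$ is the set of monic polynomials of degree $m$, identified with $\mathbb{Z}_p^m$ via non-leading coefficients; these carry Haar measure and subsets carry the restricted measure. For $f\in\mathbb{Z}_p[x]$, $\overline f$ denotes its reduction mod $p$ in $\mathbb{F}_p[x]$. For $k\ge0$, $P_1^{k}$ denotes the set of $h\in\mathbb{Z}_p[x]_k$ with $\overline h=1$. *)

theory Defs
  imports "HOL-Probability.Probability"
begin

text \<open>p-adic integers are represented as compatible residue sequences:
  x k is the residue of x modulo p^k, in the range 0..p^k-1.\<close>

definition Zp :: "nat \<Rightarrow> (nat \<Rightarrow> int) set" where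
  "Zp p = {x. \<forall>k. 0 \<le> x k \<and> x k < int p ^ k \<and> x k = x (Suc k) mod (int p ^ k)}"

definition zp_mult :: "nat \<Rightarrow> (nat \<Rightarrow> int) \<Rightarrow> (nat \<Rightarrow> int) \<Rightarrow> (nat \<Rightarrow> int)" where
  "zp_mult p x y = (\<lambda>k. (x k * y k) mod (int p ^ k))"

definition zp_of_int :: "nat \<Rightarrow> int \<Rightarrow> (nat \<Rightarrow> int)" where
  "zp_of_int p a = (\<lambda>k. a mod (int p ^ k))"

definition zp_red :: "(nat \<Rightarrow> int) \<Rightarrow> int" where
  "zp_red x = x 1"

text \<open>Haar (probability) measure on Z_p: image of the product of uniform
  measures on the p-adic digits under the map digits to residues.\<close>
definition haar_Zp :: "nat \<Rightarrow> (nat \<Rightarrow> int) measure" where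
  "haar_Zp p = distr (PiM UNIV (\<lambda>_::nat. uniform_count_measure {..<p}))
                     (restrict_space (PiM UNIV (\<lambda>_::nat. count_space (UNIV::int set))) (Zp p))
                     (\<lambda>d k. int (\<Sum>i<k. d i * p ^ i))"

text \<open>Z_p[x]_n, identified with Z_p^(n+1) via coefficients 0..n.\<close>
definition poly_le :: "nat \<Rightarrow> nat \<Rightarrow> (nat \<Rightarrow> nat \<Rightarrow> int) measure" where
  "poly_le p n = PiM {..n} (\<lambda>_. haar_Zp p)"

text \<open>Z_p[x]^1_m, identified with Z_p^m via the non-leading coefficients 0..m-1.\<close>
definition monic_polys :: "nat \<Rightarrow> nat \<Rightarrow> (nat \<Rightarrow> nat \<Rightarrow> int) measure" where
  "monic_polys p m = PiM {..<m} (\<lambda>_. haar_Zp p)"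

definition P1 :: "nat \<Rightarrow> nat \<Rightarrow> (nat \<Rightarrow> nat \<Rightarrow> int) set" where
  "P1 p k = {h \<in> space (poly_le p k). \<forall>j\<le>k. zp_red (h j) = (if j = 0 then 1 else 0)}"

definition Bmn :: "nat \<Rightarrow> nat \<Rightarrow> nat \<Rightarrow> (nat \<Rightarrow> nat \<Rightarrow> int) set" where
  "Bmn p m n = {f \<in> space (poly_le p n). zp_red (f m) = 1 \<and> (\<forall>j. m < j \<and> j \<le> n \<longrightarrow> zp_red (f j) = 0)}"

text \<open>For f of degree at most d (coefficients 0..d): p^r f(x/p) lies in Z_p[x] and is
  congruent to x^d mod p.  The coefficients of p^r f(x/p) are c_j with p^j c_j = p^r f_j.\<close>
definition scaled_cond :: "nat \<Rightarrow> nat \<Rightarrow> nat \<Rightarrow> (nat \<Rightarrow> nat \<Rightarrow> int) \<Rightarrow> bool" where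
  "scaled_cond p r d f \<longleftrightarrow>
     (\<exists>c. (\<forall>j\<le>d. c j \<in> Zp p
              \<and> zp_mult p (zp_of_int p (int p ^ j)) (c j) = zp_mult p (zp_of_int p (int p ^ r)) (f j)
              \<and> zp_red (c j) = (if j = d then 1 else 0)))"

definition monic_coeff :: "nat \<Rightarrow> nat \<Rightarrow> (nat \<Rightarrow> nat \<Rightarrow> int) \<Rightarrow> nat \<Rightarrow> nat \<Rightarrow> int" where
  "monic_coeff p m g a = (if a < m then g a else if a = m then zp_of_int p 1 else zp_of_int p 0)"

definition le_coeff :: "nat \<Rightarrow> nat \<Rightarrow> (nat \<Rightarrow> nat \<Rightarrow> int) \<Rightarrow> nat \<Rightarrow> nat \<Rightarrow> int" where
  "le_coeff p k h b = (if b \<le> k then h b else zp_of_int p 0)"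

definition poly_mu :: "nat \<Rightarrow> nat \<Rightarrow> nat \<Rightarrow> (nat \<Rightarrow> nat \<Rightarrow> int) \<times> (nat \<Rightarrow> nat \<Rightarrow> int) \<Rightarrow> (nat \<Rightarrow> nat \<Rightarrow> int)" where
  "poly_mu p m n gh = (\<lambda>j\<in>{..n}. \<lambda>k.
      (\<Sum>a\<le>j. monic_coeff p m (fst gh) a k * le_coeff p (n - m) (snd gh) (j - a) k) mod (int p ^ k))"

definition mp_bij :: "'a measure \<Rightarrow> 'b measure \<Rightarrow> ('a \<Rightarrow> 'b) \<Rightarrow> bool" where
  "mp_bij M N f \<longleftrightarrow> bij_betw f (space M) (space N) \<and> f \<in> measurable M N \<and> distr M N f = N"

end

theory Submission
  imports Defs "HOL-Computational_Algebra.Polynomial"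
begin


lemma Zp_memD:
  assumes "x \<in> Zp p"
  shows "0 \<le> x k" "x k < int p ^ k" "x k = x (Suc k) mod (int p ^ k)"
  using assms unfolding Zp_def mem_Collect_eq by blast+

lemma Zp_0: "x \<in> Zp p \<Longrightarrow> x 0 = 0"
  using Zp_memD[of x p 0] by simp

lemma Zp_compat:
  assumes "x \<in> Zp p" "k \<le> k'"
  shows "x k = x k' mod (int p ^ k)"
  using assms(2)
proof (induction k' rule: dec_induct)
  case base
  then show ?case using Zp_memD[OF assms(1), of k] by simp
next
  case (step k')
  have e2: "x k' = x (Suc k') mod int p ^ k'" using Zp_memD(3)[OF assms(1)] .
  have d: "int p ^ k dvd int p ^ k'" using step(1) by (simp add: le_imp_power_dvd)
  have "x k = x k' mod int p ^ k" by (rule step.IH)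
  also have "\<dots> = x (Suc k') mod int p ^ k' mod int p ^ k" by (subst e2) (rule refl)
  also have "\<dots> = x (Suc k') mod int p ^ k" by (rule mod_mod_cancel[OF d])
  finally show ?case .
qed

lemma Zp_eqI:
  assumes "x \<in> Zp p" "y \<in> Zp p" "\<And>k. k \<ge> 1 \<Longrightarrow> x k = y k"
  shows "x = y"
proof
  fix k show "x k = y k"
    using assms Zp_0[OF assms(1)] Zp_0[OF assms(2)] by (cases k) auto
qed

lemma Zp_of_level:
  assumes "p > 0" "0 \<le> c" "c < int p ^ k"
  shows "(\<lambda>i. c mod int p ^ i) \<in> Zp p" "(\<lambda>i. c mod int p ^ i) k = c"
proof -
  show "(\<lambda>i. c mod int p ^ i) \<in> Zp p"
    unfolding Zp_def using assms
    by (auto simp: mod_mod_cancel le_imp_power_dvd)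
  show "(\<lambda>i. c mod int p ^ i) k = c" using assms by simp
qed

subsection \<open>Base p digits\<close>

lemma add_mult_div_iff:
  fixes d0 p S c :: nat
  assumes "d0 < p"
  shows "(d0 + p * S = c) \<longleftrightarrow> (d0 = c mod p \<and> S = c div p)"
proof
  assume h: "d0 + p * S = c"
  have "p > 0" using assms by simp
  then show "d0 = c mod p \<and> S = c div p" using assms h[symmetric] by simp
next
  assume "d0 = c mod p \<and> S = c div p"
  then show "d0 + p * S = c" by simp
qed

lemma digits_sum_iff:
  fixes d :: "nat \<Rightarrow> nat" and p c :: nat
  assumes "\<forall>i<k. d i < p" "c < p ^ k"
  shows "(\<Sum>i<k. d i * p ^ i) = c \<longleftrightarrow> (\<forall>i<k. d i = c div p ^ i mod p)"
  using assms
proof (induction k arbitrary: d c)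
  case 0
  then show ?case by simp
next
  case (Suc k)
  have p0: "p > 0" using Suc.prems(1) by auto
  have split: "(\<Sum>i<Suc k. d i * p ^ i) = d 0 + p * (\<Sum>i<k. d (Suc i) * p ^ i)"
    unfolding sum.lessThan_Suc_shift by (simp add: sum_distrib_left ac_simps)
  have cdiv: "c div p < p ^ k" using Suc.prems(2) p0
    by (simp add: div_less_iff_less_mult mult.commute)
  have IH: "(\<Sum>i<k. d (Suc i) * p ^ i) = c div p \<longleftrightarrow> (\<forall>i<k. d (Suc i) = c div p div p ^ i mod p)"
    using Suc.IH[of "\<lambda>i. d (Suc i)" "c div p"] Suc.prems(1) cdiv by auto
  have "(\<Sum>i<Suc k. d i * p ^ i) = c \<longleftrightarrow> d 0 = c mod p \<and> (\<Sum>i<k. d (Suc i) * p ^ i) = c div p"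
    unfolding split using add_mult_div_iff[of "d 0" p] Suc.prems(1) by blast
  also have "\<dots> \<longleftrightarrow> d 0 = c mod p \<and> (\<forall>i<k. d (Suc i) = c div p ^ Suc i mod p)"
    using IH by (simp add: div_mult2_eq)
  also have "\<dots> \<longleftrightarrow> (\<forall>i<Suc k. d i = c div p ^ i mod p)"
    by (auto simp: less_Suc_eq_0_disj)
  finally show ?case .
qed

lemma digits_sum_less:
  fixes d :: "nat \<Rightarrow> nat" and p :: nat
  assumes "\<forall>i<k. d i < p"
  shows "(\<Sum>i<k. d i * p ^ i) < p ^ k"
  using assms
proof (induction k)
  case 0
  then show ?case by simp
next
  case (Suc k)
  have "(\<Sum>i<Suc k. d i * p ^ i) = (\<Sum>i<k. d i * p ^ i) + d k * p ^ k" by simp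
  also have "\<dots> < p ^ k + d k * p ^ k" using Suc by simp
  also have "\<dots> = (1 + d k) * p ^ k" by (simp add: algebra_simps)
  also have "\<dots> \<le> p * p ^ k" using Suc.prems by (intro mult_right_mono) auto
  finally show ?case by simp
qed

subsection \<open>Measurability into countable discrete spaces\<close>

lemma meas2:
  fixes f :: "'a \<Rightarrow> 'b::countable" and g :: "'a \<Rightarrow> 'c::countable"
  assumes "f \<in> measurable M (count_space UNIV)" "g \<in> measurable M (count_space UNIV)"
  shows "(\<lambda>x. F (f x) (g x)) \<in> measurable M (count_space (UNIV :: 'd set))"
proof -
  have "(\<lambda>x. (f x, g x)) \<in> measurable M (count_space UNIV \<Otimes>\<^sub>M count_space UNIV)"
    using assms by (rule measurable_Pair)
  also have "count_space (UNIV::'b set) \<Otimes>\<^sub>M count_space (UNIV::'c set) = count_space (UNIV \<times> UNIV)"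
    by (rule pair_measure_countable) auto
  finally have 1: "(\<lambda>x. (f x, g x)) \<in> measurable M (count_space (UNIV \<times> UNIV))" .
  have 2: "(\<lambda>z. F (fst z) (snd z)) \<in> measurable (count_space (UNIV \<times> UNIV)) (count_space (UNIV :: 'd set))"
    by simp
  show ?thesis using measurable_comp[OF 1 2] by (simp add: comp_def)
qed

lemma meas_sum:
  fixes f :: "'i \<Rightarrow> 'a \<Rightarrow> 'b::{countable, comm_monoid_add}"
  assumes "finite I" "\<And>i. i \<in> I \<Longrightarrow> f i \<in> measurable M (count_space UNIV)"
  shows "(\<lambda>x. \<Sum>i\<in>I. f i x) \<in> measurable M (count_space UNIV)"
  using assms
proof (induction I rule: finite_induct)
  case empty
  then show ?case by simp
next
  case (insert i I)
  have "(\<lambda>x. f i x + (\<Sum>i\<in>I. f i x)) \<in> measurable M (count_space UNIV)"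
    by (rule meas2) (use insert in auto)
  then show ?case using insert by simp
qed

lemma meas1:
  fixes f :: "'a \<Rightarrow> 'b::countable"
  assumes "f \<in> measurable M (count_space UNIV)"
  shows "(\<lambda>x. F (f x)) \<in> measurable M (count_space (UNIV :: 'd set))"
  using meas2[OF assms assms, of "\<lambda>a b. F a"] by simp

subsection \<open>Haar measure\<close>

definition "dig p = PiM UNIV (\<lambda>_::nat. uniform_count_measure {..<p})"
definition "zcount = PiM UNIV (\<lambda>_::nat. count_space (UNIV::int set))"
definition "phi p = (\<lambda>d k. int (\<Sum>i<k. d i * p ^ i))"

lemma haar_def': "haar_Zp p = distr (dig p) (restrict_space zcount (Zp p)) (phi p)"
  by (simp add: haar_Zp_def dig_def zcount_def phi_def)

lemma space_dig: "space (dig p) = PiE UNIV (\<lambda>_. {..<p})"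
  by (simp add: dig_def space_PiM space_uniform_count_measure)

lemma space_zcount: "space zcount = UNIV"
  by (auto simp: zcount_def space_PiM PiE_def extensional_def)

lemma phi_Zp:
  assumes "p > 0" "d \<in> space (dig p)"
  shows "phi p d \<in> Zp p"
proof -
  have dl: "\<forall>i<k. d i < p" for k using assms(2) by (auto simp: space_dig)
  have lt: "(\<Sum>i<k. d i * p ^ i) < p ^ k" for k using digits_sum_less[OF dl] .
  have cp: "(\<Sum>i<k. d i * p ^ i) = (\<Sum>i<Suc k. d i * p ^ i) mod p ^ k" for k
  proof -
    have "(\<Sum>i<Suc k. d i * p ^ i) mod p ^ k = ((\<Sum>i<k. d i * p ^ i) + d k * p ^ k) mod p ^ k"
      by simp
    also have "\<dots> = (\<Sum>i<k. d i * p ^ i) mod p ^ k" by simp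
    also have "\<dots> = (\<Sum>i<k. d i * p ^ i)" using lt[of k] by simp
    finally show ?thesis by simp
  qed
  show ?thesis unfolding Zp_def phi_def mem_Collect_eq
  proof (intro allI conjI)
    fix k
    show "0 \<le> int (\<Sum>i<k. d i * p ^ i)" by (rule of_nat_0_le_iff)
    show "int (\<Sum>i<k. d i * p ^ i) < int p ^ k" using lt[of k]
      by (metis of_nat_less_iff of_nat_power)
    show "int (\<Sum>i<k. d i * p ^ i) = int (\<Sum>i<Suc k. d i * p ^ i) mod int p ^ k"
      using cp[of k] by (metis of_nat_mod of_nat_power)
  qed
qed

lemma comp_dig_meas: "(\<lambda>d. d i) \<in> measurable (dig (p::nat)) (count_space UNIV)"
proof -
  have 1: "(\<lambda>d. d i) \<in> measurable (dig p) (uniform_count_measure {..<p})"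
    unfolding dig_def by (rule measurable_component_singleton) simp
  have 2: "(\<lambda>x::nat. x) \<in> measurable (uniform_count_measure {..<p}) (count_space (UNIV::nat set))"
    by (subst measurable_cong_sets[OF sets_uniform_count_measure_count_space refl]) simp
  show ?thesis using measurable_comp[OF 1 2] by (simp add: comp_def)
qed

lemma phi_meas:
  assumes "p > 0"
  shows "phi p \<in> measurable (dig p) (restrict_space zcount (Zp p))"
proof (rule measurable_restrict_space2)
  show "phi p \<in> space (dig p) \<rightarrow> Zp p" using phi_Zp[OF assms] by blast
  show "phi p \<in> measurable (dig p) zcount"
    unfolding zcount_def
  proof (rule measurable_PiM_single')
    fix k :: nat
    have "(\<lambda>d. \<Sum>i<k. d i * p ^ i) \<in> measurable (dig p) (count_space UNIV)"
      by (rule meas_sum) (auto intro: meas1[OF comp_dig_meas])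
    then show "(\<lambda>d. phi p d k) \<in> measurable (dig p) (count_space UNIV)"
      unfolding phi_def by (rule meas1)
  qed (auto simp: PiE_def extensional_def)
qed

lemma prob_dig: "(p::nat) > 0 \<Longrightarrow> prob_space (dig p)"
  unfolding dig_def by (rule prob_space_PiM) (auto intro!: prob_space_uniform_count_measure simp: lessThan_empty_iff)

lemma haar_prob: "p > 0 \<Longrightarrow> prob_space (haar_Zp p)"
  unfolding haar_def' by (rule prob_space.prob_space_distr[OF prob_dig phi_meas])

lemma space_haar: "space (haar_Zp p) = Zp p"
  by (simp add: haar_def' space_restrict_space space_zcount)

lemma sets_haar: "sets (haar_Zp p) = sets (restrict_space zcount (Zp p))"
  by (simp add: haar_def')

lemma coord_meas: "(\<lambda>x. x k) \<in> measurable (haar_Zp p) (count_space UNIV)"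
  unfolding measurable_cong_sets[OF sets_haar refl]
  by (rule measurable_restrict_space1) (unfold zcount_def, rule measurable_component_singleton, simp)

lemma zcyl_sets: "{x \<in> Zp p. x k \<in> S} \<in> sets (haar_Zp p)"
proof -
  have "(\<lambda>x. x k) -` S \<inter> space (haar_Zp p) \<in> sets (haar_Zp p)"
    by (rule measurable_sets[OF coord_meas]) simp
  also have "(\<lambda>x. x k) -` S \<inter> space (haar_Zp p) = {x \<in> Zp p. x k \<in> S}"
    by (auto simp: space_haar)
  finally show ?thesis .
qed

lemma int_eq_nat_iff: "0 \<le> c \<Longrightarrow> (int x = c) = (x = nat c)" by auto

lemma emeasure_zcyl:
  assumes p: "p > 0" and c: "0 \<le> c" "c < int p ^ k"
  shows "emeasure (haar_Zp p) {x \<in> Zp p. x k = c} = ennreal (1 / real p) ^ k"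
proof -
  define A where "A = {x \<in> Zp p. x k = c}"
  have A: "A \<in> sets (restrict_space zcount (Zp p))"
    using zcyl_sets[of p k "{c}"] unfolding A_def sets_haar by simp
  have "emeasure (haar_Zp p) A = emeasure (dig p) (phi p -` A \<inter> space (dig p))"
    unfolding haar_def' by (rule emeasure_distr[OF phi_meas[OF p] A])
  also have "phi p -` A \<inter> space (dig p) =
      prod_emb UNIV (\<lambda>_. uniform_count_measure {..<p}) {..<k} (PiE {..<k} (\<lambda>i. {nat c div p ^ i mod p}))"
  proof -
    have "d \<in> phi p -` A \<longleftrightarrow> (\<forall>i<k. d i = nat c div p ^ i mod p)" if d: "d \<in> space (dig p)" for d
    proof -
      have e: "phi p d k = int (\<Sum>i<k. d i * p ^ i)" by (simp only: phi_def)
      have "d \<in> phi p -` A \<longleftrightarrow> phi p d k = c"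
        using phi_Zp[OF p d] unfolding A_def by simp
      also have "\<dots> \<longleftrightarrow> (\<Sum>i<k. d i * p ^ i) = nat c"
        unfolding e using int_eq_nat_iff[OF c(1)] .
      also have "\<dots> \<longleftrightarrow> (\<forall>i<k. d i = nat c div p ^ i mod p)"
      proof (rule digits_sum_iff)
        show "\<forall>i<k. d i < p" using d by (auto simp: space_dig)
        show "nat c < p ^ k" using c by (metis nat_less_iff of_nat_power)
      qed
      finally show ?thesis .
    qed
    then show ?thesis
      by (auto simp: prod_emb_def space_dig PiE_iff restrict_def space_uniform_count_measure extensional_def)
  qed
  also have "emeasure (dig p) \<dots> = (\<Prod>i<k. emeasure (uniform_count_measure {..<p}) {nat c div p ^ i mod p})"
    unfolding dig_def
    by (rule emeasure_PiM_emb) (use p in \<open>auto intro!: prob_space_uniform_count_measure simp: sets_uniform_count_measure\<close>)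
  also have "\<dots> = (\<Prod>i<k. ennreal (1 / real p))"
    using p by (intro prod.cong refl) (simp add: emeasure_uniform_count_measure)
  also have "\<dots> = ennreal (1 / real p) ^ k" by simp
  finally show ?thesis unfolding A_def .
qed



definition Om :: "nat \<Rightarrow> 'i set \<Rightarrow> ('i \<Rightarrow> nat \<Rightarrow> int) set" where
  "Om p I = PiE I (\<lambda>_. Zp p)"

definition Cyl :: "nat \<Rightarrow> 'i set \<Rightarrow> nat \<Rightarrow> ('i \<Rightarrow> int) \<Rightarrow> ('i \<Rightarrow> nat \<Rightarrow> int) set" where
  "Cyl p I k c = {f \<in> Om p I. \<forall>j\<in>I. f j k = c j}"

definition Egen :: "nat \<Rightarrow> 'i set \<Rightarrow> nat \<Rightarrow> ('i \<Rightarrow> nat \<Rightarrow> int) set set" where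
  "Egen p I K = {Cyl p I k c | k c. K \<le> k} \<union> {{}}"

definition ldet :: "nat \<Rightarrow> 'i set \<Rightarrow> nat \<Rightarrow> ('i \<Rightarrow> nat \<Rightarrow> int) set \<Rightarrow> bool" where
  "ldet p I K T \<longleftrightarrow> (\<forall>f\<in>Om p I. \<forall>f'\<in>Om p I. (\<forall>j\<in>I. f j K = f' j K) \<longrightarrow> (f \<in> T \<longleftrightarrow> f' \<in> T))"

abbreviation PH :: "nat \<Rightarrow> 'i set \<Rightarrow> ('i \<Rightarrow> nat \<Rightarrow> int) measure" where
  "PH p I \<equiv> PiM I (\<lambda>_. haar_Zp p)"

lemma space_PH: "space (PH p I) = Om p I"
  by (simp add: space_PiM space_haar Om_def)

lemma Cyl_PiE: "Cyl p I k c = PiE I (\<lambda>j. {x \<in> Zp p. x k = c j})"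
  unfolding Cyl_def Om_def by (auto simp: PiE_def Pi_def)

lemma Cyl_sets: "finite I \<Longrightarrow> Cyl p I k c \<in> sets (PH p I)"
  unfolding Cyl_PiE
  by (rule sets_PiM_I_finite) (use zcyl_sets[of p k "{_}"] in auto)

lemma Cyl_subset: "Cyl p I k c \<subseteq> Om p I"
  by (auto simp: Cyl_def)

lemma Cyl_emeasure:
  assumes p: "p > 0" and I: "finite I" and c: "\<And>j. j \<in> I \<Longrightarrow> 0 \<le> c j \<and> c j < int p ^ k"
  shows "emeasure (PH p I) (Cyl p I k c) = ennreal (1 / real p) ^ (k * card I)"
proof -
  interpret product_sigma_finite "\<lambda>_::'a. haar_Zp p"
    unfolding product_sigma_finite_def
    using haar_prob[OF p] by (simp add: prob_space_imp_sigma_finite)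
  have "emeasure (PH p I) (Cyl p I k c) = (\<Prod>j\<in>I. emeasure (haar_Zp p) {x \<in> Zp p. x k = c j})"
    unfolding Cyl_PiE by (rule emeasure_PiM[OF I]) (use zcyl_sets[of p k "{_}"] in auto)
  also have "\<dots> = (\<Prod>j\<in>I. ennreal (1 / real p) ^ k)"
    by (intro prod.cong refl) (use c emeasure_zcyl[OF p] in auto)
  also have "\<dots> = ennreal (1 / real p) ^ (k * card I)"
    by (simp add: power_mult)
  finally show ?thesis .
qed

lemma Cyl_Int:
  assumes "k \<le> k'"
  shows "Cyl p I k c \<inter> Cyl p I k' c' = (if \<forall>j\<in>I. c' j mod int p ^ k = c j then Cyl p I k' c' else {})"
proof -
  have comp: "f j k = f j k' mod int p ^ k" if "f \<in> Om p I" "j \<in> I" for f j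
    using Zp_compat[OF _ assms] that by (auto simp: Om_def)
  show ?thesis
  proof (cases "\<forall>j\<in>I. c' j mod int p ^ k = c j")
    case True
    have "Cyl p I k' c' \<subseteq> Cyl p I k c"
    proof
      fix f assume f: "f \<in> Cyl p I k' c'"
      have "f j k = c j" if j: "j \<in> I" for j
      proof -
        have "f j k = f j k' mod int p ^ k" using comp[of f j] f j by (simp add: Cyl_def)
        also have "\<dots> = c' j mod int p ^ k" using f j by (simp add: Cyl_def)
        also have "\<dots> = c j" using True j by simp
        finally show ?thesis .
      qed
      then show "f \<in> Cyl p I k c" using f by (simp add: Cyl_def)
    qed
    then show ?thesis using True by auto
  next
    case False
    then obtain j where j: "j \<in> I" "c' j mod int p ^ k \<noteq> c j" by auto
    have "f \<notin> Cyl p I k c \<inter> Cyl p I k' c'" for f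
    proof
      assume f: "f \<in> Cyl p I k c \<inter> Cyl p I k' c'"
      have "f j k = f j k' mod int p ^ k" using comp[of f j] f j by (simp add: Cyl_def)
      also have "\<dots> = c' j mod int p ^ k" using f j by (simp add: Cyl_def)
      finally have "f j k \<noteq> c j" using j by simp
      then show False using f j by (simp add: Cyl_def)
    qed
    then show ?thesis using False by auto
  qed
qed

lemma Egen_Int_stable: "Int_stable (Egen p I K)"
  unfolding Int_stable_def
proof (intro ballI)
  fix a b assume a: "a \<in> Egen p I K" and b: "b \<in> Egen p I K"
  show "a \<inter> b \<in> Egen p I K"
  proof (cases "a = {} \<or> b = {}")
    case True
    then show ?thesis by (auto simp: Egen_def)
  next
    case False
    then obtain k c k' c' where a': "a = Cyl p I k c" "K \<le> k" and b': "b = Cyl p I k' c'" "K \<le> k'"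
      using a b by (auto simp: Egen_def)
    show ?thesis
    proof (cases "k \<le> k'")
      case True
      then show ?thesis using Cyl_Int[OF True, of p I c c'] a' b' by (auto simp: Egen_def)
    next
      case False
      then have kk: "k' \<le> k" by simp
      show ?thesis using Cyl_Int[OF kk, of p I c' c] a' b' by (auto simp: Egen_def Int_commute)
    qed
  qed
qed

lemma Egen_sub: "Egen p I K \<subseteq> Pow (Om p I)"
  by (auto simp: Egen_def Cyl_def)

lemma Cyl_cover:
  "\<Union>(Cyl p I K ` PiE I (\<lambda>_. {0..<int p ^ K})) = Om p I"
proof
  show "\<Union>(Cyl p I K ` PiE I (\<lambda>_. {0..<int p ^ K})) \<subseteq> Om p I" by (auto simp: Cyl_def)
  show "Om p I \<subseteq> \<Union>(Cyl p I K ` PiE I (\<lambda>_. {0..<int p ^ K}))"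
  proof
    fix f assume f: "f \<in> Om p I"
    then have "restrict (\<lambda>j. f j K) I \<in> PiE I (\<lambda>_. {0..<int p ^ K})"
      using Zp_memD(1,2) by (force simp: Om_def PiE_iff)
    moreover have "f \<in> Cyl p I K (restrict (\<lambda>j. f j K) I)" using f by (auto simp: Cyl_def)
    ultimately show "f \<in> \<Union>(Cyl p I K ` PiE I (\<lambda>_. {0..<int p ^ K}))" by blast
  qed
qed

lemma coordset_in_sigma:
  assumes I: "finite I" and i: "i \<in> I"
  shows "{f \<in> Om p I. f i k \<in> S} \<in> sigma_sets (Om p I) (Egen p I K)"
proof -
  define K' where "K' = max k K"
  define C where "C = {c \<in> PiE I (\<lambda>_. {0..<int p ^ K'}). c i mod int p ^ k \<in> S}"
  have fin: "finite C" unfolding C_def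
    by (rule finite_subset[of _ "PiE I (\<lambda>_. {0..<int p ^ K'})"]) (use I in \<open>auto intro: finite_PiE\<close>)
  have comp: "f j k = f j K' mod int p ^ k" if "f \<in> Om p I" "j \<in> I" for f j
    using Zp_compat[of "f j" p k K'] that by (auto simp: Om_def K'_def)
  have eq: "{f \<in> Om p I. f i k \<in> S} = \<Union>(Cyl p I K' ` C)"
  proof
    show "{f \<in> Om p I. f i k \<in> S} \<subseteq> \<Union>(Cyl p I K' ` C)"
    proof
      fix f assume f: "f \<in> {f \<in> Om p I. f i k \<in> S}"
      then have "restrict (\<lambda>j. f j K') I \<in> C"
        using Zp_memD(1,2) comp[of f i] i by (force simp: Om_def PiE_iff C_def)
      moreover have "f \<in> Cyl p I K' (restrict (\<lambda>j. f j K') I)" using f by (auto simp: Cyl_def)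
      ultimately show "f \<in> \<Union>(Cyl p I K' ` C)" by blast
    qed
    show "\<Union>(Cyl p I K' ` C) \<subseteq> {f \<in> Om p I. f i k \<in> S}"
    proof
      fix f assume "f \<in> \<Union>(Cyl p I K' ` C)"
      then obtain c where c: "c \<in> C" "f \<in> Cyl p I K' c" by auto
      have "f i k = f i K' mod int p ^ k" using comp[of f i] c i by (simp add: Cyl_def)
      also have "\<dots> = c i mod int p ^ k" using c i by (simp add: Cyl_def)
      finally show "f \<in> {f \<in> Om p I. f i k \<in> S}" using c by (auto simp: C_def Cyl_def)
    qed
  qed
  have "\<Union>(Cyl p I K' ` C) \<in> sigma_sets (Om p I) (Egen p I K)"
  proof (rule sigma_sets_UNION)
    show "countable (Cyl p I K' ` C)" using fin by (simp add: countable_finite)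
    show "\<And>b. b \<in> Cyl p I K' ` C \<Longrightarrow> b \<in> sigma_sets (Om p I) (Egen p I K)"
      by (rule sigma_sets.Basic) (auto simp: Egen_def K'_def)
  qed
  then show ?thesis using eq by simp
qed

lemma sets_PH_gen:
  assumes I: "finite I"
  shows "sets (PH p I) = sigma_sets (Om p I) (Egen p I K)"
proof
  show "sigma_sets (Om p I) (Egen p I K) \<subseteq> sets (PH p I)"
    unfolding space_PH[symmetric]
    by (rule sets.sigma_sets_subset) (auto simp: Egen_def intro: Cyl_sets[OF I])
  have zc: "sets zcount = sigma_sets UNIV {{f \<in> UNIV. f k \<in> A} | k A. A \<in> sets (count_space (UNIV::int set))}"
    unfolding zcount_def sets_PiM_single by (simp add: PiE_def extensional_def)
  have main: "{f \<in> Om p I. f i \<in> A0} \<in> sigma_sets (Om p I) (Egen p I K)"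
    if i: "i \<in> I" and A0: "A0 \<in> sigma_sets UNIV {{f \<in> UNIV. f k \<in> A} | k A. A \<in> sets (count_space (UNIV::int set))}" for i A0
    using A0
  proof (induction rule: sigma_sets.induct)
    case (Basic a)
    then obtain k A where "a = {f \<in> UNIV. f k \<in> A}" by auto
    then have "{f \<in> Om p I. f i \<in> a} = {f \<in> Om p I. f i k \<in> A}" by auto
    then show ?case using coordset_in_sigma[OF I i] by simp
  next
    case Empty
    then show ?case by (simp add: sigma_sets.Empty)
  next
    case (Compl a)
    have "{f \<in> Om p I. f i \<in> UNIV - a} = Om p I - {f \<in> Om p I. f i \<in> a}" by auto
    then show ?case using sigma_sets.Compl[OF Compl.IH] by simp
  next
    case (Union a)
    have "{f \<in> Om p I. f i \<in> \<Union>(range a)} = (\<Union>n. {f \<in> Om p I. f i \<in> a n})" by auto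
    then show ?case using sigma_sets.Union[of "\<lambda>n. {f \<in> Om p I. f i \<in> a n}"] Union.IH by simp
  qed
  show "sets (PH p I) \<subseteq> sigma_sets (Om p I) (Egen p I K)"
    unfolding sets_PiM_single space_haar Om_def[symmetric]
  proof (rule sigma_sets_mono)
    show "{{f \<in> Om p I. f i \<in> A} |i A. i \<in> I \<and> A \<in> sets (haar_Zp p)}
          \<subseteq> sigma_sets (Om p I) (Egen p I K)"
    proof clarify
      fix i A assume i: "i \<in> I" and A: "A \<in> sets (haar_Zp p)"
      then obtain A0 where A0: "A0 \<in> sets zcount" "A = Zp p \<inter> A0"
        unfolding sets_haar sets_restrict_space by auto
      have "{f \<in> Om p I. f i \<in> A} = {f \<in> Om p I. f i \<in> A0}"
        using i A0(2) by (auto simp: Om_def)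
      then show "{f \<in> Om p I. f i \<in> A} \<in> sigma_sets (Om p I) (Egen p I K)"
        using main[OF i] A0(1) unfolding zc by simp
    qed
  qed
qed

lemma ldet_cyl:
  assumes "ldet p I K T" "K \<le> k"
  shows "Cyl p I k c \<subseteq> T \<or> Cyl p I k c \<inter> T = {}"
proof (rule ccontr)
  assume "\<not> ?thesis"
  then obtain f f' where f: "f \<in> Cyl p I k c" "f \<notin> T" and f': "f' \<in> Cyl p I k c" "f' \<in> T" by auto
  have "\<forall>j\<in>I. f j K = f' j K"
  proof
    fix j assume j: "j \<in> I"
    have "f j K = f j k mod int p ^ K" "f' j K = f' j k mod int p ^ K"
      using Zp_compat[of "f j" p K k] Zp_compat[of "f' j" p K k] assms(2) f(1) f'(1) j by (auto simp: Cyl_def Om_def)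
    moreover have "f j k = c j" "f' j k = c j" using f(1) f'(1) j by (auto simp: Cyl_def)
    ultimately show "f j K = f' j K" by simp
  qed
  then show False using assms(1) f f' unfolding ldet_def Cyl_def by blast
qed

lemma ldet_mono:
  assumes "ldet p I K T" "K \<le> K'"
  shows "ldet p I K' T"
  unfolding ldet_def
proof (intro ballI impI)
  fix f f' assume f: "f \<in> Om p I" "f' \<in> Om p I" and eq: "\<forall>j\<in>I. f j K' = f' j K'"
  have "\<forall>j\<in>I. f j K = f' j K"
  proof
    fix j assume j: "j \<in> I"
    have "f j K = f j K' mod int p ^ K" "f' j K = f' j K' mod int p ^ K"
      using Zp_compat[OF _ assms(2)] f j by (auto simp: Om_def)
    then show "f j K = f' j K" using eq j by simp
  qed
  then show "f \<in> T \<longleftrightarrow> f' \<in> T" using assms(1) f unfolding ldet_def by blast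
qed

lemma ldet_sets:
  assumes I: "finite I" and T: "ldet p I K T"
  shows "T \<inter> Om p I \<in> sets (PH p I)"
proof -
  define C where "C = {c \<in> PiE I (\<lambda>_. {0..<int p ^ K}). Cyl p I K c \<subseteq> T}"
  have "T \<inter> Om p I = \<Union>(Cyl p I K ` C)"
  proof
    show "T \<inter> Om p I \<subseteq> \<Union>(Cyl p I K ` C)"
    proof
      fix f assume f: "f \<in> T \<inter> Om p I"
      have fc: "f \<in> Cyl p I K (restrict (\<lambda>j. f j K) I)" using f by (auto simp: Cyl_def)
      then have "Cyl p I K (restrict (\<lambda>j. f j K) I) \<subseteq> T"
        using ldet_cyl[OF T order_refl, of "restrict (\<lambda>j. f j K) I"] f by blast
      moreover have "restrict (\<lambda>j. f j K) I \<in> PiE I (\<lambda>_. {0..<int p ^ K})"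
        using f Zp_memD(1,2) by (force simp: Om_def PiE_iff)
      ultimately show "f \<in> \<Union>(Cyl p I K ` C)" using fc unfolding C_def by blast
    qed
    show "\<Union>(Cyl p I K ` C) \<subseteq> T \<inter> Om p I" by (auto simp: C_def Cyl_def)
  qed
  moreover have "\<Union>(Cyl p I K ` C) \<in> sets (PH p I)"
  proof (intro sets.finite_UN)
    show "finite C" unfolding C_def
      by (rule finite_subset[of _ "PiE I (\<lambda>_. {0..<int p ^ K})"]) (use I in \<open>auto intro: finite_PiE\<close>)
  qed (use I in \<open>auto intro: Cyl_sets\<close>)
  ultimately show ?thesis by simp
qed



definition pdvd :: "int \<Rightarrow> int poly \<Rightarrow> bool" where
  "pdvd q P \<longleftrightarrow> (\<forall>i. q dvd coeff P i)"

lemma pdvd_add: "pdvd q P \<Longrightarrow> pdvd q Q \<Longrightarrow> pdvd q (P + Q)"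
  by (simp add: pdvd_def)

lemma pdvd_diff: "pdvd q P \<Longrightarrow> pdvd q Q \<Longrightarrow> pdvd q (P - Q)"
  by (simp add: pdvd_def)

lemma pdvd_minus: "pdvd q P \<Longrightarrow> pdvd q (- P)"
  by (simp add: pdvd_def)

lemma pdvd_multR: "pdvd q P \<Longrightarrow> pdvd q (P * Q)"
  by (simp add: pdvd_def coeff_mult dvd_sum)

lemma pdvd_multL: "pdvd q P \<Longrightarrow> pdvd q (Q * P)"
  by (simp add: pdvd_def coeff_mult dvd_sum)

lemma pdvd_mult_mult: "pdvd q P \<Longrightarrow> pdvd q' Q \<Longrightarrow> pdvd (q * q') (P * Q)"
  unfolding pdvd_def coeff_mult by (auto intro!: dvd_sum mult_dvd_mono)

lemma pdvd_smult: "pdvd q (smult q X)"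
  by (simp add: pdvd_def)

lemma pdvd_dvd: "q' dvd q \<Longrightarrow> pdvd q P \<Longrightarrow> pdvd q' P"
  by (auto simp: pdvd_def intro: dvd_trans)

lemma pdvd_smult_cancel: "q \<noteq> 0 \<Longrightarrow> pdvd (q * r) (smult q X) \<Longrightarrow> pdvd r X"
  by (simp add: pdvd_def)

lemma pdvd_obtain:
  assumes "pdvd q P" "q \<noteq> 0"
  obtains U where "P = smult q U" "\<And>i. coeff P i = 0 \<Longrightarrow> coeff U i = 0"
proof -
  define U where "U = map_poly (\<lambda>c. c div q) P"
  have cU: "coeff U i = coeff P i div q" for i unfolding U_def by (simp add: coeff_map_poly)
  have "P = smult q U"
    by (rule poly_eqI) (use assms in \<open>auto simp: cU pdvd_def\<close>)
  moreover have "coeff U i = 0" if "coeff P i = 0" for i using that by (simp add: cU)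
  ultimately show ?thesis using that by blast
qed

definition lowdeg :: "nat \<Rightarrow> int poly \<Rightarrow> bool" where
  "lowdeg m X \<longleftrightarrow> (\<forall>i\<ge>m. coeff X i = 0)"

lemma key_lemma:
  assumes G: "degree G = m" "coeff G m = 1" and U: "lowdeg m U"
    and dv: "pdvd p (U + G * V)" and p: "p \<noteq> 0"
  shows "pdvd p U \<and> pdvd p V"
proof -
  obtain W where W: "U + G * V = smult p W"
    using pdvd_obtain[OF dv p] by blast
  have G0: "G \<noteq> 0" using G by auto
  obtain Q R where QR: "pseudo_divmod W G = (Q, R)" by (cases "pseudo_divmod W G") auto
  have "smult (coeff G (degree G) ^ (Suc (degree W) - degree G)) W = G * Q + R"
    by (rule pseudo_divmod(1)[OF G0 QR])
  then have WQR: "W = G * Q + R" using G by simp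
  have "R = 0 \<or> degree R < degree G" by (rule pseudo_divmod(2)[OF G0 QR])
  then have lR: "lowdeg m R" using G by (auto simp: lowdeg_def coeff_eq_0)
  define Y where "Y = V - smult p Q"
  have GY: "G * Y = smult p R - U"
  proof -
    have "G * Y = G * V - smult p (G * Q)" by (simp add: Y_def algebra_simps)
    also have "\<dots> = (smult p W - U) - smult p (W - R)" using W WQR by (simp add: algebra_simps)
    also have "\<dots> = smult p R - U" by (simp add: algebra_simps smult_diff_right)
    finally show ?thesis .
  qed
  have lGY: "lowdeg m (G * Y)" using lR U unfolding GY lowdeg_def by simp
  have Y0: "Y = 0"
  proof (rule ccontr)
    assume "Y \<noteq> 0"
    then have "coeff (G * Y) (degree G + degree Y) \<noteq> 0"
      using coeff_mult_degree_sum[of G Y] G by simp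
    moreover have "degree G + degree Y \<ge> m" using G by simp
    ultimately show False using lGY by (simp add: lowdeg_def)
  qed
  have "V = smult p Q" using Y0 by (simp add: Y_def)
  moreover have "U = smult p R" using GY Y0 by simp
  ultimately show ?thesis by (simp add: pdvd_smult)
qed

lemma uniq_lift:
  assumes G1: "degree G1 = m" "coeff G1 m = 1" and G2: "degree G2 = m" "coeff G2 m = 1"
    and H1: "pdvd p (H1 - 1)" and H2: "pdvd p (H2 - 1)" and p: "p \<noteq> 0"
    and k: "k \<ge> 1" and dv: "pdvd (p ^ k) (G1 * H1 - G2 * H2)"
  shows "pdvd (p ^ k) (G1 - G2) \<and> pdvd (p ^ k) (H1 - H2)"
  using k dv
proof (induction k)
  case 0
  then show ?case by simp
next
  case (Suc k)
  show ?case
  proof (cases "k = 0")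
    case True
    have e1: "G1 - G2 = (G1 * H1 - G2 * H2) - G1 * (H1 - 1) + G2 * (H2 - 1)"
      by (simp add: algebra_simps)
    have a: "pdvd p (G1 * (H1 - 1))" by (rule pdvd_multL[OF H1])
    have b: "pdvd p (G2 * (H2 - 1))" by (rule pdvd_multL[OF H2])
    have c: "pdvd p (G1 * H1 - G2 * H2)" using Suc.prems(2) True by simp
    have "pdvd p (G1 - G2)" unfolding e1 by (rule pdvd_add[OF pdvd_diff[OF c a] b])
    moreover have "pdvd p (H1 - H2)"
      using pdvd_diff[OF H1 H2] by (simp add: algebra_simps)
    ultimately show ?thesis using True by simp
  next
    case False
    then have k1: "k \<ge> 1" by simp
    have "pdvd (p ^ k) (G1 * H1 - G2 * H2)"
      by (rule pdvd_dvd[OF _ Suc.prems(2)]) (simp add: le_imp_power_dvd)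
    then have IH: "pdvd (p ^ k) (G1 - G2)" "pdvd (p ^ k) (H1 - H2)" using Suc.IH k1 by auto
    have pk: "p ^ k \<noteq> 0" using p by simp
    obtain U where U: "G2 - G1 = smult (p ^ k) U" "\<And>i. coeff (G2 - G1) i = 0 \<Longrightarrow> coeff U i = 0"
      using pdvd_obtain[OF pdvd_minus[OF IH(1)] pk] by auto
    obtain V where V: "H2 - H1 = smult (p ^ k) V"
      using pdvd_obtain[OF pdvd_minus[OF IH(2)] pk] by auto
    have lU: "lowdeg m U"
      unfolding lowdeg_def
    proof (intro allI impI)
      fix i assume i: "m \<le> i"
      have "coeff (G2 - G1) i = 0"
      proof (cases "i = m")
        case True then show ?thesis using G1 G2 by simp
      next
        case False
        then have "degree G1 < i" "degree G2 < i" using i G1 G2 by auto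
        then show ?thesis by (simp add: coeff_eq_0)
      qed
      then show "coeff U i = 0" by (rule U(2))
    qed
    have G2e: "G2 = G1 + smult (p ^ k) U" using U(1) by (simp add: algebra_simps)
    have H2e: "H2 = H1 + smult (p ^ k) V" using V by (simp add: algebra_simps)
    have expand: "G1 * H1 - G2 * H2 = - smult (p ^ k) (U * H1 + G1 * V) - smult (p ^ k * p ^ k) (U * V)"
      unfolding G2e H2e by (simp add: algebra_simps smult_add_right)
    have d1: "pdvd (p ^ Suc k) (smult (p ^ k * p ^ k) (U * V))"
    proof (rule pdvd_dvd[OF _ pdvd_smult])
      show "p ^ Suc k dvd p ^ k * p ^ k" using k1
        by (metis le_add1 le_imp_power_dvd power_add Suc_eq_plus1 add_le_mono1 mult_2 plus_1_eq_Suc)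
    qed
    have "pdvd (p ^ Suc k) (smult (p ^ k) (U * H1 + G1 * V))"
    proof -
      have "smult (p ^ k) (U * H1 + G1 * V) = - ((G1 * H1 - G2 * H2) + smult (p ^ k * p ^ k) (U * V))"
        unfolding expand by simp
      then show ?thesis by (simp only:) (rule pdvd_minus[OF pdvd_add[OF Suc.prems(2) d1]])
    qed
    then have "pdvd (p ^ k * p) (smult (p ^ k) (U * H1 + G1 * V))"
      by (simp only: power_Suc2)
    then have "pdvd p (U * H1 + G1 * V)"
      by (rule pdvd_smult_cancel[OF pk])
    moreover have "U * H1 + G1 * V = (U + G1 * V) + U * (H1 - 1)" by (simp add: algebra_simps)
    ultimately have "pdvd p (U + G1 * V)"
      using pdvd_multL[OF H1, of U] by (metis add_diff_cancel pdvd_diff)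
    then have UV: "pdvd p U" "pdvd p V" using key_lemma[OF G1 lU _ p] by auto
    have "pdvd (p ^ Suc k) (G1 - G2)"
    proof -
      have "G1 - G2 = - smult (p ^ k) U" using U(1) by (simp add: algebra_simps)
      then show ?thesis using UV(1) by (simp add: pdvd_def mult_dvd_mono)
    qed
    moreover have "pdvd (p ^ Suc k) (H1 - H2)"
    proof -
      have "H1 - H2 = - smult (p ^ k) V" using V by (simp add: algebra_simps)
      then show ?thesis using UV(2) by (simp add: pdvd_def mult_dvd_mono)
    qed
    ultimately show ?thesis by simp
  qed
qed



definition GP :: "nat \<Rightarrow> (nat \<Rightarrow> int) \<Rightarrow> int poly" where
  "GP m \<alpha> = monom 1 m + (\<Sum>a<m. monom (\<alpha> a) a)"

definition HP :: "nat \<Rightarrow> (nat \<Rightarrow> int) \<Rightarrow> int poly" where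
  "HP d \<beta> = (\<Sum>b\<le>d. monom (\<beta> b) b)"

lemma coeff_GP: "coeff (GP m \<alpha>) i = (if i < m then \<alpha> i else if i = m then 1 else 0)"
  unfolding GP_def by (auto simp: coeff_sum)

lemma coeff_HP: "coeff (HP d \<beta>) i = (if i \<le> d then \<beta> i else 0)"
  unfolding HP_def by (auto simp: coeff_sum)

lemma degree_GP: "degree (GP m \<alpha>) = m"
proof (rule antisym)
  show "degree (GP m \<alpha>) \<le> m" by (rule degree_le) (simp add: coeff_GP)
  show "m \<le> degree (GP m \<alpha>)" by (rule le_degree) (simp add: coeff_GP)
qed

lemma coeff_GP_m: "coeff (GP m \<alpha>) m = 1"
  by (simp add: coeff_GP)

lemma coeff_prod_high:
  assumes "j > m + d"
  shows "coeff (GP m \<alpha> * HP d \<beta>) j = 0"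
proof -
  have "degree (HP d \<beta>) \<le> d" by (rule degree_le) (simp add: coeff_HP)
  then have "degree (GP m \<alpha> * HP d \<beta>) \<le> m + d"
    using degree_mult_le[of "GP m \<alpha>" "HP d \<beta>"] by (simp add: degree_GP)
  then show ?thesis using assms by (simp add: coeff_eq_0)
qed

lemma pdvd_GP_diff:
  assumes "\<And>a. a < m \<Longrightarrow> q dvd \<alpha> a - \<alpha>' a"
  shows "pdvd q (GP m \<alpha> - GP m \<alpha>')"
  using assms by (simp add: pdvd_def coeff_GP)

lemma pdvd_HP_diff:
  assumes "\<And>b. b \<le> d \<Longrightarrow> q dvd \<beta> b - \<beta>' b"
  shows "pdvd q (HP d \<beta> - HP d \<beta>')"
  using assms by (simp add: pdvd_def coeff_HP)

lemma prod_cong_mod: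
  assumes "\<And>a. a < m \<Longrightarrow> \<alpha> a mod q = \<alpha>' a mod q"
    and "\<And>b. b \<le> d \<Longrightarrow> \<beta> b mod q = \<beta>' b mod q"
  shows "coeff (GP m \<alpha> * HP d \<beta>) j mod q = coeff (GP m \<alpha>' * HP d \<beta>') j mod q"
proof -
  have g: "pdvd q (GP m \<alpha> - GP m \<alpha>')"
    by (rule pdvd_GP_diff) (use assms(1) in \<open>simp add: mod_eq_dvd_iff\<close>)
  have h: "pdvd q (HP d \<beta> - HP d \<beta>')"
    by (rule pdvd_HP_diff) (use assms(2) in \<open>simp add: mod_eq_dvd_iff\<close>)
  have e: "GP m \<alpha> * HP d \<beta> - GP m \<alpha>' * HP d \<beta>'
      = GP m \<alpha> * (HP d \<beta> - HP d \<beta>') + (GP m \<alpha> - GP m \<alpha>') * HP d \<beta>'"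
    by (simp add: algebra_simps)
  have "pdvd q (GP m \<alpha> * HP d \<beta> - GP m \<alpha>' * HP d \<beta>')"
    unfolding e by (rule pdvd_add[OF pdvd_multL[OF h] pdvd_multR[OF g]])
  then show ?thesis by (simp add: pdvd_def mod_eq_dvd_iff)
qed

definition Rk :: "nat \<Rightarrow> nat \<Rightarrow> int \<Rightarrow> int set" where
  "Rk p k e = {x. 0 \<le> x \<and> x < int p ^ k \<and> x mod int p = e}"

definition DomK :: "nat \<Rightarrow> nat \<Rightarrow> nat \<Rightarrow> nat \<Rightarrow> ((nat \<Rightarrow> int) \<times> (nat \<Rightarrow> int)) set" where
  "DomK p m d k = PiE {..<m} (\<lambda>_. {0..<int p ^ k}) \<times> PiE {..d} (\<lambda>b. Rk p k (if b = 0 then 1 else 0))"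

definition TgtK :: "nat \<Rightarrow> nat \<Rightarrow> nat \<Rightarrow> nat \<Rightarrow> (nat \<Rightarrow> int) set" where
  "TgtK p m d k = PiE {..m+d} (\<lambda>j. if j < m then {0..<int p ^ k} else Rk p k (if j = m then 1 else 0))"

definition muK :: "nat \<Rightarrow> nat \<Rightarrow> nat \<Rightarrow> nat \<Rightarrow> (nat \<Rightarrow> int) \<times> (nat \<Rightarrow> int) \<Rightarrow> nat \<Rightarrow> int" where
  "muK p m d k x = (\<lambda>j\<in>{..m+d}. coeff (GP m (fst x) * HP d (snd x)) j mod int p ^ k)"

lemma HP_pdvd_1:
  assumes "\<beta> \<in> PiE {..d} (\<lambda>b. Rk p k (if b = 0 then 1 else 0))" "p > 1" "k \<ge> 1"
  shows "pdvd (int p) (HP d \<beta> - 1)"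
  unfolding pdvd_def
proof
  fix i
  have "int p dvd \<beta> i - (if i = 0 then 1 else 0)" if "i \<le> d"
  proof -
    have "\<beta> i mod int p = (if i = 0 then 1 else 0)" using PiE_mem[OF assms(1), of i] that by (auto simp: Rk_def)
    then have "\<beta> i mod int p = (if i = 0 then 1 else 0) mod int p" using assms(2) by auto
    then show ?thesis by (simp add: mod_eq_dvd_iff)
  qed
  then show "int p dvd coeff (HP d \<beta> - 1) i"
    by (auto simp: coeff_HP coeff_1)
qed

lemma prime_gt1: "prime (p::nat) \<Longrightarrow> p > 1"
  by (rule prime_gt_1_nat)

lemma mod_pow_mod: "k \<ge> 1 \<Longrightarrow> (x::int) mod (int p ^ k) mod int p = x mod int p"
  by (rule mod_mod_cancel) (simp add: dvd_power)

lemma muK_maps: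
  assumes p: "p > 1" and k: "k \<ge> 1" and x: "x \<in> DomK p m d k"
  shows "muK p m d k x \<in> TgtK p m d k"
proof -
  obtain \<alpha> \<beta> where x': "x = (\<alpha>, \<beta>)" by (cases x)
  have h1: "pdvd (int p) (HP d \<beta> - 1)" using HP_pdvd_1[of \<beta> d p k] x x' p k by (auto simp: DomK_def)
  have "pdvd (int p) (GP m \<alpha> * HP d \<beta> - GP m \<alpha>)"
    using pdvd_multL[OF h1, of "GP m \<alpha>"] by (simp add: algebra_simps)
  then have cm: "coeff (GP m \<alpha> * HP d \<beta>) j mod int p = coeff (GP m \<alpha>) j mod int p" for j
    by (simp add: pdvd_def mod_eq_dvd_iff)
  have pk: "int p ^ k > 0" using p by simp
  show ?thesis
    unfolding TgtK_def muK_def x'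
  proof (rule PiE_I)
    fix j assume j: "j \<in> {..m+d}"
    let ?v = "coeff (GP m \<alpha> * HP d \<beta>) j mod int p ^ k"
    have r: "0 \<le> ?v" "?v < int p ^ k" using pk by auto
    have "?v mod int p = coeff (GP m \<alpha>) j mod int p" using mod_pow_mod[OF k] cm by simp
    then have "j \<ge> m \<Longrightarrow> ?v mod int p = (if j = m then 1 else 0)"
      using p by (auto simp: coeff_GP)
    then show "(\<lambda>j\<in>{..m + d}. coeff (GP m (fst (\<alpha>, \<beta>)) * HP d (snd (\<alpha>, \<beta>))) j mod int p ^ k) j
        \<in> (if j < m then {0..<int p ^ k} else Rk p k (if j = m then 1 else 0))"
      using j r by (auto simp: Rk_def)
  qed auto
qed

lemma eq_of_dvd_range:
  fixes x y q :: int
  assumes "0 \<le> x" "x < q" "0 \<le> y" "y < q" "q dvd x - y"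
  shows "x = y"
proof -
  have "x mod q = y mod q" using assms(5) by (simp add: mod_eq_dvd_iff)
  then show ?thesis using assms by simp
qed

lemma muK_inj:
  assumes p: "p > 1" and k: "k \<ge> 1"
  shows "inj_on (muK p m d k) (DomK p m d k)"
proof (rule inj_onI)
  fix x y assume x: "x \<in> DomK p m d k" and y: "y \<in> DomK p m d k" and eq: "muK p m d k x = muK p m d k y"
  obtain \<alpha> \<beta> where x': "x = (\<alpha>, \<beta>)" by (cases x)
  obtain \<alpha>' \<beta>' where y': "y = (\<alpha>', \<beta>')" by (cases y)
  have h1: "pdvd (int p) (HP d \<beta> - 1)" using HP_pdvd_1[of \<beta> d p k] x x' p k by (auto simp: DomK_def)
  have h2: "pdvd (int p) (HP d \<beta>' - 1)" using HP_pdvd_1[of \<beta>' d p k] y y' p k by (auto simp: DomK_def)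
  have "pdvd (int p ^ k) (GP m \<alpha> * HP d \<beta> - GP m \<alpha>' * HP d \<beta>')"
    unfolding pdvd_def
  proof
    fix j
    show "int p ^ k dvd coeff (GP m \<alpha> * HP d \<beta> - GP m \<alpha>' * HP d \<beta>') j"
    proof (cases "j \<le> m + d")
      case True
      then have "coeff (GP m \<alpha> * HP d \<beta>) j mod int p ^ k = coeff (GP m \<alpha>' * HP d \<beta>') j mod int p ^ k"
        using fun_cong[OF eq, of j] unfolding x' y' muK_def by simp
      then show ?thesis by (simp add: mod_eq_dvd_iff)
    next
      case False
      then show ?thesis by (simp add: coeff_prod_high)
    qed
  qed
  then have U: "pdvd (int p ^ k) (GP m \<alpha> - GP m \<alpha>') \<and> pdvd (int p ^ k) (HP d \<beta> - HP d \<beta>')"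
    using uniq_lift[OF degree_GP coeff_GP_m degree_GP coeff_GP_m h1 h2 _ k] p
    by (simp add: of_nat_power)
  have "\<alpha> = \<alpha>'"
  proof
    fix a show "\<alpha> a = \<alpha>' a"
    proof (cases "a < m")
      case True
      have "int p ^ k dvd \<alpha> a - \<alpha>' a" using U True unfolding pdvd_def
        by (metis coeff_GP coeff_diff)
      then show ?thesis using x y x' y' True by (intro eq_of_dvd_range) (auto simp: DomK_def)
    next
      case False
      then show ?thesis using x y x' y' by (auto simp: DomK_def PiE_def extensional_def)
    qed
  qed
  moreover have "\<beta> = \<beta>'"
  proof
    fix b show "\<beta> b = \<beta>' b"
    proof (cases "b \<le> d")
      case True
      have "int p ^ k dvd \<beta> b - \<beta>' b" using U True unfolding pdvd_def
        by (metis coeff_HP coeff_diff)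
      then show ?thesis using x y x' y' True by (intro eq_of_dvd_range) (auto simp: DomK_def Rk_def)
    next
      case False
      then show ?thesis using x y x' y' by (auto simp: DomK_def PiE_def extensional_def)
    qed
  qed
  ultimately show "x = y" using x' y' by simp
qed

lemma card_Rk:
  assumes p: "p > 1" and k: "k \<ge> 1" and e: "0 \<le> e" "e < int p"
  shows "card (Rk p k e) = p ^ (k - 1)"
proof -
  define q where "q = int p ^ (k - 1)"
  have pk: "int p ^ k = int p * q" unfolding q_def using k
    by (metis Suc_diff_le diff_Suc_1 power_Suc)
  have q0: "q > 0" unfolding q_def using p by simp
  have eq: "Rk p k e = (\<lambda>y. e + int p * y) ` {0..<q}"
  proof
    show "Rk p k e \<subseteq> (\<lambda>y. e + int p * y) ` {0..<q}"
    proof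
      fix x assume x: "x \<in> Rk p k e"
      then have x1: "0 \<le> x" "x < int p * q" "x mod int p = e" using pk by (auto simp: Rk_def)
      have "x = e + int p * (x div int p)" using x1(3) by (metis mult_div_mod_eq add.commute)
      moreover have "x div int p \<in> {0..<q}"
      proof -
        have "x mod int p \<ge> 0" using p by simp
        then have "x div int p * int p \<le> x" using div_mult_mod_eq[of x "int p"] by linarith
        then have "x div int p * int p < q * int p" using x1(2) by (simp add: mult.commute)
        then have "x div int p < q" using p by (simp add: mult_less_cancel_right)
        moreover have "0 \<le> x div int p" using x1(1) p by (simp add: pos_imp_zdiv_nonneg_iff)
        ultimately show ?thesis by simp
      qed
      ultimately show "x \<in> (\<lambda>y. e + int p * y) ` {0..<q}" by blast
    qed
    show "(\<lambda>y. e + int p * y) ` {0..<q} \<subseteq> Rk p k e"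
    proof
      fix x assume "x \<in> (\<lambda>y. e + int p * y) ` {0..<q}"
      then obtain y where y: "0 \<le> y" "y < q" "x = e + int p * y" by auto
      have "int p * y \<le> int p * (q - 1)" using y p by (intro mult_left_mono) auto
      then have "x < int p * q" using y e by (simp add: algebra_simps)
      moreover have "x mod int p = e" using y e by simp
      moreover have "0 \<le> x" using y e p by simp
      ultimately show "x \<in> Rk p k e" using pk by (simp add: Rk_def)
    qed
  qed
  have "card (Rk p k e) = card {0..<q}"
    unfolding eq by (rule card_image) (use p in \<open>auto simp: inj_on_def\<close>)
  also have "\<dots> = nat q" by simp
  also have "\<dots> = p ^ (k - 1)" unfolding q_def by (simp add: nat_power_eq)
  finally show ?thesis .
qed

lemma nat_int_pow[simp]: "nat (int p ^ k) = p ^ k"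
  by (metis nat_int of_nat_power)

lemma card_int_range: "card {0..<int p ^ k} = p ^ k"
  by simp

lemma finite_Rk: "finite (Rk p k e)"
  by (rule finite_subset[of _ "{0..<int p ^ k}"]) (auto simp: Rk_def)

lemma card_DomK:
  assumes p: "p > 1" and k: "k \<ge> 1"
  shows "card (DomK p m d k) = p ^ (k * m) * p ^ ((k - 1) * (d + 1))"
proof -
  have "card (DomK p m d k) = (\<Prod>a<m. card {0..<int p ^ k}) * (\<Prod>b\<le>d. card (Rk p k (if b = 0 then 1 else 0)))"
    unfolding DomK_def by (simp add: card_cartesian_product card_PiE)
  also have "\<dots> = (\<Prod>a<m. p ^ k) * (\<Prod>b\<le>d. p ^ (k - 1))"
    using p k by (intro arg_cong2[where f="(*)"] prod.cong refl) (auto simp: card_int_range card_Rk)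
  also have "\<dots> = p ^ (k * m) * p ^ ((k - 1) * (d + 1))"
    by (simp add: power_mult[symmetric] power_add)
  finally show ?thesis .
qed

lemma card_TgtK:
  assumes p: "p > 1" and k: "k \<ge> 1"
  shows "card (TgtK p m d k) = p ^ (k * m) * p ^ ((k - 1) * (d + 1))"
proof -
  have "card (TgtK p m d k) = (\<Prod>j\<le>m+d. card (if j < m then {0..<int p ^ k} else Rk p k (if j = m then 1 else 0)))"
    unfolding TgtK_def by (simp add: card_PiE)
  also have "\<dots> = (\<Prod>j\<le>m+d. if j < m then p ^ k else p ^ (k - 1))"
    using p k by (intro prod.cong refl) (auto simp: card_int_range card_Rk)
  also have "\<dots> = (\<Prod>j\<in>{..<m}. p ^ k) * (\<Prod>j\<in>{m..m+d}. p ^ (k - 1))"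
  proof -
    have u: "{..m+d} = {..<m} \<union> {m..m+d}" by auto
    have "(\<Prod>j\<le>m+d. if j < m then p ^ k else p ^ (k - 1))
        = (\<Prod>j\<in>{..<m}. if j < m then p ^ k else p ^ (k - 1)) * (\<Prod>j\<in>{m..m+d}. if j < m then p ^ k else p ^ (k - 1))"
      unfolding u by (rule prod.union_disjoint) auto
    also have "\<dots> = (\<Prod>j\<in>{..<m}. p ^ k) * (\<Prod>j\<in>{m..m+d}. p ^ (k - 1))"
      by (intro arg_cong2[where f="(*)"] prod.cong refl) auto
    finally show ?thesis .
  qed
  also have "\<dots> = p ^ (k * m) * p ^ ((k - 1) * (d + 1))"
    by (simp add: power_mult[symmetric] power_add)
  finally show ?thesis .
qed

lemma finite_TgtK: "finite (TgtK p m d k)"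
  unfolding TgtK_def by (rule finite_PiE) (auto simp: finite_Rk)

lemma muK_bij:
  assumes p: "p > 1" and k: "k \<ge> 1"
  shows "bij_betw (muK p m d k) (DomK p m d k) (TgtK p m d k)"
proof -
  have inj: "inj_on (muK p m d k) (DomK p m d k)" by (rule muK_inj[OF p k])
  have sub: "muK p m d k ` DomK p m d k \<subseteq> TgtK p m d k" using muK_maps[OF p k] by blast
  have "card (muK p m d k ` DomK p m d k) = card (TgtK p m d k)"
    using card_image[OF inj] card_DomK[OF p k] card_TgtK[OF p k] by simp
  then have "muK p m d k ` DomK p m d k = TgtK p m d k"
    using card_subset_eq[OF finite_TgtK sub] by simp
  then show ?thesis using inj by (simp add: bij_betw_def)
qed



lemma sum_mod_cong:
  fixes f g :: "'a \<Rightarrow> int"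
  assumes "\<And>a. a \<in> A \<Longrightarrow> f a mod q = g a mod q"
  shows "sum f A mod q = sum g A mod q"
proof -
  have "sum f A mod q = (\<Sum>a\<in>A. f a mod q) mod q" by (simp add: mod_sum_eq)
  also have "\<dots> = (\<Sum>a\<in>A. g a mod q) mod q" using assms by (simp cong: sum.cong)
  also have "\<dots> = sum g A mod q" by (simp add: mod_sum_eq)
  finally show ?thesis .
qed

lemma space_poly_le: "space (poly_le p n) = Om p {..n}"
  by (simp add: poly_le_def space_PH)

lemma space_monic: "space (monic_polys p m) = Om p {..<m}"
  by (simp add: monic_polys_def space_PH)

lemma P1_sub: "P1 p d \<subseteq> Om p {..d}"
  by (auto simp: P1_def space_poly_le)

lemma Bmn_sub: "Bmn p m n \<subseteq> Om p {..n}"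
  by (auto simp: Bmn_def space_poly_le)

definition tr :: "nat \<Rightarrow> nat \<Rightarrow> nat \<Rightarrow> (nat \<Rightarrow> nat \<Rightarrow> int) \<times> (nat \<Rightarrow> nat \<Rightarrow> int) \<Rightarrow> (nat \<Rightarrow> int) \<times> (nat \<Rightarrow> int)" where
  "tr m d k x = (restrict (\<lambda>a. fst x a k) {..<m}, restrict (\<lambda>b. snd x b k) {..d})"

lemma GP_restrict: "GP m (restrict \<alpha> {..<m}) = GP m \<alpha>"
  by (rule poly_eqI) (simp add: coeff_GP)

lemma HP_restrict: "HP d (restrict \<beta> {..d}) = HP d \<beta>"
  by (rule poly_eqI) (simp add: coeff_HP)

lemma mu_coeff:
  assumes j: "j \<le> m + d"
  shows "poly_mu p m (m + d) (g, h) j k = coeff (GP m (\<lambda>a. g a k) * HP d (\<lambda>b. h b k)) j mod int p ^ k"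
proof -
  have "poly_mu p m (m + d) (g, h) j k =
      (\<Sum>a\<le>j. monic_coeff p m g a k * le_coeff p d h (j - a) k) mod int p ^ k"
    using j by (simp add: poly_mu_def)
  also have "\<dots> = (\<Sum>a\<le>j. coeff (GP m (\<lambda>a. g a k)) a * coeff (HP d (\<lambda>b. h b k)) (j - a)) mod int p ^ k"
  proof (rule sum_mod_cong)
    fix a
    have 1: "monic_coeff p m g a k mod int p ^ k = coeff (GP m (\<lambda>a. g a k)) a mod int p ^ k"
      by (simp add: monic_coeff_def coeff_GP zp_of_int_def)
    have 2: "le_coeff p d h (j - a) k mod int p ^ k = coeff (HP d (\<lambda>b. h b k)) (j - a) mod int p ^ k"
      by (simp add: le_coeff_def coeff_HP zp_of_int_def)
    show "monic_coeff p m g a k * le_coeff p d h (j - a) k mod int p ^ k =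
        coeff (GP m (\<lambda>a. g a k)) a * coeff (HP d (\<lambda>b. h b k)) (j - a) mod int p ^ k"
      using 1 2 by (metis mod_mult_eq)
  qed
  also have "\<dots> = coeff (GP m (\<lambda>a. g a k) * HP d (\<lambda>b. h b k)) j mod int p ^ k"
    by (simp add: coeff_mult)
  finally show ?thesis .
qed

lemma mu_level:
  assumes j: "j \<le> m + d"
  shows "poly_mu p m (m + d) x j k = muK p m d k (tr m d k x) j"
proof -
  obtain g h where x: "x = (g, h)" by (cases x)
  have "muK p m d k (tr m d k x) j = coeff (GP m (restrict (\<lambda>a. g a k) {..<m}) * HP d (restrict (\<lambda>b. h b k) {..d})) j mod int p ^ k"
    unfolding muK_def tr_def x fst_conv snd_conv using j by (subst restrict_apply') auto
  also have "\<dots> = coeff (GP m (\<lambda>a. g a k) * HP d (\<lambda>b. h b k)) j mod int p ^ k"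
    by (simp only: GP_restrict HP_restrict)
  finally show ?thesis unfolding x mu_coeff[OF j] by simp
qed

lemma mu_in_Om:
  assumes g: "g \<in> Om p {..<m}" and h: "h \<in> Om p {..d}" and p: "p > 1"
  shows "poly_mu p m (m + d) (g, h) \<in> Om p {..m + d}"
  unfolding Om_def
proof (rule PiE_I)
  fix j assume j: "j \<in> {..m + d}"
  have ga: "g a \<in> Zp p" if "a < m" for a using g that by (auto simp: Om_def)
  have hb: "h b \<in> Zp p" if "b \<le> d" for b using h that by (auto simp: Om_def)
  show "poly_mu p m (m + d) (g, h) j \<in> Zp p"
    unfolding Zp_def mem_Collect_eq
  proof (intro allI conjI)
    fix k
    have pk: "int p ^ k > 0" using p by simp
    show "0 \<le> poly_mu p m (m + d) (g, h) j k" "poly_mu p m (m + d) (g, h) j k < int p ^ k"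
      using j pk by (auto simp: mu_coeff)
    have c: "coeff (GP m (\<lambda>a. g a k) * HP d (\<lambda>b. h b k)) j mod int p ^ k =
          coeff (GP m (\<lambda>a. g a (Suc k)) * HP d (\<lambda>b. h b (Suc k))) j mod int p ^ k"
    proof (rule prod_cong_mod)
      fix a assume "a < m"
      then show "g a k mod int p ^ k = g a (Suc k) mod int p ^ k"
        using Zp_memD(3)[OF ga[of a], of k] by simp
    next
      fix b assume "b \<le> d"
      then show "h b k mod int p ^ k = h b (Suc k) mod int p ^ k"
        using Zp_memD(3)[OF hb[of b], of k] by simp
    qed
    have dv: "int p ^ k dvd int p * int p ^ k" by simp
    show "poly_mu p m (m + d) (g, h) j k = poly_mu p m (m + d) (g, h) j (Suc k) mod int p ^ k"
      using j unfolding mu_coeff[OF j[simplified]] c by (simp add: mod_mod_cancel[OF dv])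
  qed
next
  show "\<And>j. j \<notin> {..m + d} \<Longrightarrow> poly_mu p m (m + d) (g, h) j = undefined"
    by (simp add: poly_mu_def)
qed



lemma tr_Dom:
  assumes p: "p > 1" and k: "k \<ge> 1" and g: "g \<in> Om p {..<m}" and h: "h \<in> P1 p d"
  shows "tr m d k (g, h) \<in> DomK p m d k"
proof -
  have ga: "g a \<in> Zp p" if "a < m" for a using g that by (auto simp: Om_def)
  have hb: "h b \<in> Zp p" "zp_red (h b) = (if b = 0 then 1 else 0)" if "b \<le> d" for b
    using h that P1_sub[of p d] by (auto simp: Om_def P1_def)
  have "restrict (\<lambda>a. g a k) {..<m} \<in> PiE {..<m} (\<lambda>_. {0..<int p ^ k})"
    using Zp_memD(1,2)[OF ga] by auto
  moreover have "restrict (\<lambda>b. h b k) {..d} \<in> PiE {..d} (\<lambda>b. Rk p k (if b = 0 then 1 else 0))"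
  proof (rule PiE_I)
    fix b assume b: "b \<in> {..d}"
    have "h b 1 = h b k mod int p ^ 1" using Zp_compat[OF hb(1) k] b by simp
    then have "h b k mod int p = (if b = 0 then 1 else 0)" using hb(2)[of b] b by (simp add: zp_red_def)
    then show "restrict (\<lambda>b. h b k) {..d} b \<in> Rk p k (if b = 0 then 1 else 0)"
      using b hb(1)[of b] Zp_memD(1,2)[of "h b" p k] by (simp add: Rk_def)
  qed simp
  ultimately show ?thesis by (simp add: tr_def DomK_def)
qed

lemma B_Tgt:
  assumes p: "p > 1" and k: "k \<ge> 1" and f: "f \<in> Bmn p m (m + d)"
  shows "restrict (\<lambda>j. f j k) {..m + d} \<in> TgtK p m d k"
  unfolding TgtK_def
proof (rule PiE_I)
  fix j assume j: "j \<in> {..m + d}"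
  have fj: "f j \<in> Zp p" using f j Bmn_sub[of p m "m + d"] by (auto simp: Om_def)
  have red: "f j k mod int p = f j 1" using Zp_compat[OF fj k] by simp
  have r: "0 \<le> f j k" "f j k < int p ^ k" using Zp_memD(1,2)[OF fj] by auto
  show "restrict (\<lambda>j. f j k) {..m + d} j
      \<in> (if j < m then {0..<int p ^ k} else Rk p k (if j = m then 1 else 0))"
  proof (cases "j < m")
    case True
    then show ?thesis using j r by simp
  next
    case False
    have "f j 1 = (if j = m then 1 else 0)" using f j False by (auto simp: Bmn_def zp_red_def)
    then show ?thesis using j r red False by (simp add: Rk_def)
  qed
qed simp

lemma Tgt1_B:
  assumes p: "p > 1" and f: "f \<in> Om p {..m + d}" and t: "restrict (\<lambda>j. f j 1) {..m + d} \<in> TgtK p m d 1"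
  shows "f \<in> Bmn p m (m + d)"
proof -
  have v: "f j 1 = (if j = m then 1 else 0)" if "m \<le> j" "j \<le> m + d" for j
  proof -
    have "f j 1 \<in> Rk p 1 (if j = m then 1 else 0)" using PiE_mem[OF t[unfolded TgtK_def], of j] that by simp
    then show ?thesis by (auto simp: Rk_def)
  qed
  show ?thesis using f v by (auto simp: Bmn_def space_poly_le zp_red_def)
qed

lemma mu_restrict:
  "restrict (\<lambda>j. poly_mu p m (m + d) x j k) {..m + d} = muK p m d k (tr m d k x)"
  by (rule ext) (auto simp: mu_level muK_def)

lemma mu_bij:
  assumes p: "p > 1"
  shows "bij_betw (poly_mu p m (m + d)) (Om p {..<m} \<times> P1 p d) (Bmn p m (m + d))"
proof -
  let ?mu = "poly_mu p m (m + d)"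
  have inOm: "?mu x \<in> Om p {..m + d}" if x: "x \<in> Om p {..<m} \<times> P1 p d" for x
  proof -
    obtain g h where x': "x = (g, h)" by (cases x)
    have "g \<in> Om p {..<m}" "h \<in> Om p {..d}" using x x' P1_sub[of p d] by auto
    then show ?thesis unfolding x' by (rule mu_in_Om[OF _ _ p])
  qed
  have maps: "?mu ` (Om p {..<m} \<times> P1 p d) \<subseteq> Bmn p m (m + d)"
  proof
    fix y assume "y \<in> ?mu ` (Om p {..<m} \<times> P1 p d)"
    then obtain g h where gh: "g \<in> Om p {..<m}" "h \<in> P1 p d" and y: "y = ?mu (g, h)" by auto
    have "restrict (\<lambda>j. ?mu (g, h) j 1) {..m + d} = muK p m d 1 (tr m d 1 (g, h))"
      by (rule mu_restrict)
    also have "\<dots> \<in> TgtK p m d 1" by (rule muK_maps[OF p order_refl tr_Dom[OF p order_refl gh]])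
    finally have "restrict (\<lambda>j. ?mu (g, h) j 1) {..m + d} \<in> TgtK p m d 1" .
    then show "y \<in> Bmn p m (m + d)" using Tgt1_B[OF p inOm[of "(g, h)"]] gh y by auto
  qed
  have inj: "inj_on ?mu (Om p {..<m} \<times> P1 p d)"
  proof (rule inj_onI)
    fix x y assume x: "x \<in> Om p {..<m} \<times> P1 p d" and y: "y \<in> Om p {..<m} \<times> P1 p d" and eq: "?mu x = ?mu y"
    obtain g h where x': "x = (g, h)" by (cases x)
    obtain g' h' where y': "y = (g', h')" by (cases y)
    have treq: "tr m d k x = tr m d k y" if k: "k \<ge> 1" for k
    proof -
      have "muK p m d k (tr m d k x) = muK p m d k (tr m d k y)"
        using mu_restrict[of p m d x k] mu_restrict[of p m d y k] eq by simp
      moreover have "tr m d k x \<in> DomK p m d k" using tr_Dom[OF p k, of g m h d] x x' by auto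
      moreover have "tr m d k y \<in> DomK p m d k" using tr_Dom[OF p k, of g' m h' d] y y' by auto
      ultimately show ?thesis by (rule inj_onD[OF muK_inj[OF p k]])
    qed
    have "g = g'"
    proof
      fix a show "g a = g' a"
      proof (cases "a < m")
        case True
        have "g a \<in> Zp p" "g' a \<in> Zp p" using x y x' y' True by (auto simp: Om_def)
        moreover have "g a k = g' a k" if "k \<ge> 1" for k
          using fun_cong[OF arg_cong[where f=fst, OF treq[OF that]], of a] True x' y'
          by (simp add: tr_def)
        ultimately show ?thesis by (rule Zp_eqI)
      next
        case False
        then show ?thesis using x y x' y' by (auto simp: Om_def PiE_def extensional_def)
      qed
    qed
    moreover have "h = h'"
    proof
      fix b show "h b = h' b"
      proof (cases "b \<le> d")
        case True
        have "h b \<in> Zp p" "h' b \<in> Zp p" using x y x' y' True P1_sub[of p d] by (auto simp: Om_def)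
        moreover have "h b k = h' b k" if "k \<ge> 1" for k
          using fun_cong[OF arg_cong[where f=snd, OF treq[OF that]], of b] True x' y'
          by (simp add: tr_def)
        ultimately show ?thesis by (rule Zp_eqI)
      next
        case False
        have "h \<in> Om p {..d}" "h' \<in> Om p {..d}" using x y x' y' P1_sub[of p d] by auto
        then show ?thesis using False by (auto simp: Om_def PiE_def extensional_def)
      qed
    qed
    ultimately show "x = y" using x' y' by simp
  qed
  have surj: "Bmn p m (m + d) \<subseteq> ?mu ` (Om p {..<m} \<times> P1 p d)"
  proof
    fix f assume f: "f \<in> Bmn p m (m + d)"
    have fOm: "f \<in> Om p {..m + d}" using f Bmn_sub by auto
    define tf where "tf k = restrict (\<lambda>j. f j k) {..m + d}" for k
    define pre where "pre k = inv_into (DomK p m d k) (muK p m d k) (tf k)" for k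
    have pre: "pre k \<in> DomK p m d k" "muK p m d k (pre k) = tf k" if k: "k \<ge> 1" for k
    proof -
      have "tf k \<in> TgtK p m d k" unfolding tf_def by (rule B_Tgt[OF p k f])
      then show "pre k \<in> DomK p m d k" "muK p m d k (pre k) = tf k"
        using muK_bij[OF p k] unfolding pre_def
        by (auto simp: bij_betw_def inv_into_into f_inv_into_f)
    qed
    have compat: "(\<forall>a<m. fst (pre k) a = fst (pre (Suc k)) a mod int p ^ k) \<and> (\<forall>b\<le>d. snd (pre k) b = snd (pre (Suc k)) b mod int p ^ k)"
      if k: "k \<ge> 1" for k
    proof -
      have k1: "Suc k \<ge> 1" by simp
      obtain \<alpha> \<beta> where ab: "pre (Suc k) = (\<alpha>, \<beta>)" by (cases "pre (Suc k)")
      define red where "red = (restrict (\<lambda>a. \<alpha> a mod int p ^ k) {..<m}, restrict (\<lambda>b. \<beta> b mod int p ^ k) {..d})"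
      have dom1: "(\<alpha>, \<beta>) \<in> DomK p m d (Suc k)" using pre(1)[OF k1] ab by simp
      have pk: "int p ^ k > 0" using p by simp
      have redD: "red \<in> DomK p m d k"
        unfolding red_def DomK_def
      proof (intro SigmaI PiE_I)
        fix b assume b: "b \<in> {..d}"
        have "\<beta> \<in> PiE {..d} (\<lambda>b. Rk p (Suc k) (if b = 0 then 1 else 0))" using dom1 by (simp add: DomK_def)
        then have "\<beta> b \<in> Rk p (Suc k) (if b = 0 then 1 else 0)" using b by (rule PiE_mem)
        then have "\<beta> b mod int p = (if b = 0 then 1 else 0)" by (simp add: Rk_def)
        then show "restrict (\<lambda>b. \<beta> b mod int p ^ k) {..d} b \<in> Rk p k (if b = 0 then 1 else 0)"
          using b pk mod_pow_mod[OF k, of "\<beta> b" p] by (simp add: Rk_def)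
      qed (use pk in auto)
      have dvk: "int p ^ k dvd int p ^ Suc k" by (simp add: le_imp_power_dvd)
      have "muK p m d k red = tf k"
      proof (rule ext)
        fix j
        show "muK p m d k red j = tf k j"
        proof (cases "j \<le> m + d")
          case True
          have "muK p m d k red j = coeff (GP m (fst red) * HP d (snd red)) j mod int p ^ k"
            using True by (simp add: muK_def)
          also have "\<dots> = coeff (GP m \<alpha> * HP d \<beta>) j mod int p ^ k"
            by (rule prod_cong_mod) (auto simp: red_def)
          also have "\<dots> = (coeff (GP m \<alpha> * HP d \<beta>) j mod int p ^ Suc k) mod int p ^ k"
            by (simp only: mod_mod_cancel[OF dvk])
          also have "\<dots> = muK p m d (Suc k) (pre (Suc k)) j mod int p ^ k"
            using True ab by (simp add: muK_def)
          also have "\<dots> = f j (Suc k) mod int p ^ k"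
            using pre(2)[OF k1] True by (simp add: tf_def)
          also have "\<dots> = f j k"
          proof -
            have "f j \<in> Zp p" using fOm True by (auto simp: Om_def)
            from Zp_memD(3)[OF this, of k] show ?thesis by simp
          qed
          finally show ?thesis using True by (simp add: tf_def)
        next
          case False
          then show ?thesis by (simp add: muK_def tf_def)
        qed
      qed
      then have "red = pre k"
        using inj_onD[OF muK_inj[OF p k] _ redD pre(1)[OF k]] pre(2)[OF k] by simp
      then have f1: "fst (pre k) = restrict (\<lambda>a. \<alpha> a mod int p ^ k) {..<m}"
        and f2: "snd (pre k) = restrict (\<lambda>b. \<beta> b mod int p ^ k) {..d}"
        unfolding red_def by (metis fst_conv, metis snd_conv)
      show ?thesis using ab by (simp add: f1 f2)
    qed
    define g where "g = restrict (\<lambda>a k. if k = 0 then 0 else fst (pre k) a) {..<m}"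
    define h where "h = restrict (\<lambda>b k. if k = 0 then 0 else snd (pre k) b) {..d}"
    have rng1: "0 \<le> fst (pre k) a \<and> fst (pre k) a < int p ^ k" if "k \<ge> 1" "a < m" for k a
    proof -
      have "fst (pre k) \<in> PiE {..<m} (\<lambda>_. {0..<int p ^ k})"
        using pre(1)[OF that(1)] by (auto simp: DomK_def mem_Times_iff)
      then have "fst (pre k) a \<in> {0..<int p ^ k}" by (rule PiE_mem) (simp add: that(2))
      then show ?thesis by simp
    qed
    have rng2: "0 \<le> snd (pre k) b \<and> snd (pre k) b < int p ^ k" if "k \<ge> 1" "b \<le> d" for k b
    proof -
      have "snd (pre k) \<in> PiE {..d} (\<lambda>b. Rk p k (if b = 0 then 1 else 0))"
        using pre(1)[OF that(1)] by (auto simp: DomK_def mem_Times_iff)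
      then have "snd (pre k) b \<in> Rk p k (if b = 0 then 1 else 0)" by (rule PiE_mem) (simp add: that(2))
      then show ?thesis by (simp add: Rk_def)
    qed
    have gZ: "g a \<in> Zp p" if a: "a < m" for a
      unfolding Zp_def mem_Collect_eq
    proof (intro allI conjI)
      fix k
      show "0 \<le> g a k" "g a k < int p ^ k" using rng1[of k a] a by (auto simp: g_def)
      show "g a k = g a (Suc k) mod int p ^ k"
        using compat[of k] a by (cases "k = 0") (auto simp: g_def)
    qed
    have hZ: "h b \<in> Zp p" if b: "b \<le> d" for b
      unfolding Zp_def mem_Collect_eq
    proof (intro allI conjI)
      fix k
      show "0 \<le> h b k" "h b k < int p ^ k" using rng2[of k b] b by (auto simp: h_def)
      show "h b k = h b (Suc k) mod int p ^ k"
        using compat[of k] b by (cases "k = 0") (auto simp: h_def)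
    qed
    have gOm: "g \<in> Om p {..<m}" using gZ by (auto simp: Om_def g_def)
    have hOm: "h \<in> Om p {..d}" using hZ by (auto simp: Om_def h_def)
    have hP1: "h \<in> P1 p d"
    proof -
      have "zp_red (h b) = (if b = 0 then 1 else 0)" if b: "b \<le> d" for b
      proof -
        have "snd (pre 1) \<in> PiE {..d} (\<lambda>b. Rk p 1 (if b = 0 then 1 else 0))"
          using pre(1)[of 1] by (auto simp: DomK_def mem_Times_iff)
        then have "snd (pre 1) b \<in> Rk p 1 (if b = 0 then 1 else 0)" by (rule PiE_mem) (simp add: b)
        then have "snd (pre 1) b = (if b = 0 then 1 else 0)" by (auto simp: Rk_def)
        then show ?thesis using b by (simp add: zp_red_def h_def)
      qed
      then show ?thesis using hOm by (simp add: P1_def space_poly_le)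
    qed
    have trk: "tr m d k (g, h) = pre k" if k: "k \<ge> 1" for k
    proof -
      have e1: "fst (pre k) \<in> extensional {..<m}" "snd (pre k) \<in> extensional {..d}"
        using pre(1)[OF k] by (auto simp: DomK_def mem_Times_iff PiE_def)
      have "restrict (\<lambda>a. g a k) {..<m} = restrict (fst (pre k)) {..<m}"
        using k by (auto simp: g_def)
      also have "\<dots> = fst (pre k)" by (rule extensional_restrict[OF e1(1)])
      finally have a1: "restrict (\<lambda>a. g a k) {..<m} = fst (pre k)" .
      have "restrict (\<lambda>b. h b k) {..d} = restrict (snd (pre k)) {..d}"
        using k by (auto simp: h_def)
      also have "\<dots> = snd (pre k)" by (rule extensional_restrict[OF e1(2)])
      finally have a2: "restrict (\<lambda>b. h b k) {..d} = snd (pre k)" .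
      show ?thesis using a1 a2 by (simp add: tr_def)
    qed
    have "?mu (g, h) = f"
    proof
      fix j show "?mu (g, h) j = f j"
      proof (cases "j \<le> m + d")
        case True
        have muZ: "?mu (g, h) j \<in> Zp p" using mu_in_Om[OF gOm hOm p] True by (auto simp: Om_def)
        have fZ: "f j \<in> Zp p" using fOm True by (auto simp: Om_def)
        show ?thesis
        proof (rule Zp_eqI[OF muZ fZ])
          fix k :: nat assume k: "k \<ge> 1"
          have "?mu (g, h) j k = muK p m d k (tr m d k (g, h)) j" by (rule mu_level[OF True])
          also have "\<dots> = tf k j" using pre(2)[OF k] trk[OF k] by simp
          also have "\<dots> = f j k" using True by (simp add: tf_def)
          finally show "?mu (g, h) j k = f j k" .
        qed
      next
        case False
        then show ?thesis using fOm by (auto simp: poly_mu_def Om_def PiE_def extensional_def)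
      qed
    qed
    then show "f \<in> ?mu ` (Om p {..<m} \<times> P1 p d)" using gOm hP1 by force
  qed
  show ?thesis unfolding bij_betw_def using maps inj surj by blast
qed



lemma mu_meas:
  assumes p: "p > 1"
    and F1: "\<And>a k. a < m \<Longrightarrow> (\<lambda>x. fst x a k) \<in> measurable M (count_space UNIV)"
    and F2: "\<And>b k. b \<le> d \<Longrightarrow> (\<lambda>x. snd x b k) \<in> measurable M (count_space UNIV)"
    and sp: "poly_mu p m (m + d) \<in> space M \<rightarrow> Om p {..m + d}"
  shows "poly_mu p m (m + d) \<in> measurable M (poly_le p (m + d))"
  unfolding poly_le_def
proof (rule measurable_PiM_single')
  show "poly_mu p m (m + d) \<in> space M \<rightarrow> (\<Pi>\<^sub>E i\<in>{..m + d}. space (haar_Zp p))"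
    using sp by (simp add: space_haar Om_def)
  fix j assume j: "j \<in> {..m + d}"
  have comp: "(\<lambda>x. poly_mu p m (m + d) x j k) \<in> measurable M (count_space UNIV)" for k
  proof -
    have mc: "(\<lambda>x. monic_coeff p m (fst x) a k) \<in> measurable M (count_space UNIV)" for a
      by (cases "a < m") (auto simp: monic_coeff_def intro: F1)
    have lc: "(\<lambda>x. le_coeff p d (snd x) b k) \<in> measurable M (count_space UNIV)" for b
      by (cases "b \<le> d") (auto simp: le_coeff_def intro: F2)
    have "(\<lambda>x. (\<Sum>a\<le>j. monic_coeff p m (fst x) a k * le_coeff p d (snd x) (j - a) k) mod int p ^ k)
        \<in> measurable M (count_space UNIV)"
      by (rule meas1, rule meas_sum) (auto intro: meas2[OF mc lc])
    moreover have "poly_mu p m (m + d) x j k =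
        (\<Sum>a\<le>j. monic_coeff p m (fst x) a k * le_coeff p d (snd x) (j - a) k) mod int p ^ k" for x
      using j by (cases x) (simp add: poly_mu_def)
    ultimately show ?thesis by simp
  qed
  have "(\<lambda>x. poly_mu p m (m + d) x j) \<in> measurable M (restrict_space zcount (Zp p))"
  proof (rule measurable_restrict_space2)
    show "(\<lambda>x. poly_mu p m (m + d) x j) \<in> space M \<rightarrow> Zp p"
      using sp j by (auto simp: Om_def)
    show "(\<lambda>x. poly_mu p m (m + d) x j) \<in> measurable M zcount"
      unfolding zcount_def
      by (rule measurable_PiM_single') (use comp in \<open>auto simp: PiE_def extensional_def\<close>)
  qed
  then show "(\<lambda>x. poly_mu p m (m + d) x j) \<in> measurable M (haar_Zp p)"
    by (simp add: measurable_cong_sets[OF refl sets_haar])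
qed

lemma comp_meas_PH:
  assumes "i \<in> I"
  shows "(\<lambda>f. f i k) \<in> measurable (PH p I) (count_space UNIV)"
  using measurable_comp[OF measurable_component_singleton[OF assms] coord_meas[of k p]]
  by (simp add: comp_def)

lemma Cyl_sub_B:
  assumes p: "p > 1" and k: "k \<ge> 1" and c: "restrict c {..m + d} \<in> TgtK p m d k"
  shows "Cyl p {..m + d} k c \<subseteq> Bmn p m (m + d)"
proof
  fix f assume f: "f \<in> Cyl p {..m + d} k c"
  have fOm: "f \<in> Om p {..m + d}" using f by (simp add: Cyl_def)
  have "restrict (\<lambda>j. f j 1) {..m + d} \<in> TgtK p m d 1"
    unfolding TgtK_def
  proof (rule PiE_I)
    fix j assume j: "j \<in> {..m + d}"
    have fj: "f j \<in> Zp p" using fOm j by (auto simp: Om_def)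
    have e: "f j 1 = c j mod int p" using Zp_compat[OF fj k] f j by (simp add: Cyl_def)
    have cj: "c j \<in> (if j < m then {0..<int p ^ k} else Rk p k (if j = m then 1 else 0))"
      using PiE_mem[OF c[unfolded TgtK_def] j] j by simp
    show "restrict (\<lambda>j. f j 1) {..m + d} j \<in> (if j < m then {0..<int p ^ 1} else Rk p 1 (if j = m then 1 else 0))"
      using cj j e p by (auto simp: Rk_def)
  qed simp
  then show "f \<in> Bmn p m (m + d)" by (rule Tgt1_B[OF p fOm])
qed

lemma mu_in_Cyl_iff:
  assumes p: "p > 1" and k: "k \<ge> 1" and g: "g \<in> Om p {..<m}" and h: "h \<in> P1 p d"
    and ab: "(\<alpha>, \<beta>) \<in> DomK p m d k" and mab: "muK p m d k (\<alpha>, \<beta>) = restrict c {..m + d}"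
  shows "poly_mu p m (m + d) (g, h) \<in> Cyl p {..m + d} k c \<longleftrightarrow>
      g \<in> Cyl p {..<m} k \<alpha> \<and> h \<in> Cyl p {..d} k \<beta>"
proof -
  have hOm: "h \<in> Om p {..d}" using h P1_sub by auto
  have muOm: "poly_mu p m (m + d) (g, h) \<in> Om p {..m + d}" by (rule mu_in_Om[OF g hOm p])
  have "poly_mu p m (m + d) (g, h) \<in> Cyl p {..m + d} k c \<longleftrightarrow>
      restrict (\<lambda>j. poly_mu p m (m + d) (g, h) j k) {..m + d} = restrict c {..m + d}"
    using muOm by (auto simp: Cyl_def restrict_def fun_eq_iff)
  also have "\<dots> \<longleftrightarrow> muK p m d k (tr m d k (g, h)) = muK p m d k (\<alpha>, \<beta>)"
    by (simp add: mu_restrict mab)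
  also have "\<dots> \<longleftrightarrow> tr m d k (g, h) = (\<alpha>, \<beta>)"
    using inj_onD[OF muK_inj[OF p k] _ tr_Dom[OF p k g h] ab] by auto
  also have "\<dots> \<longleftrightarrow> g \<in> Cyl p {..<m} k \<alpha> \<and> h \<in> Cyl p {..d} k \<beta>"
  proof -
    have ea: "\<alpha> \<in> extensional {..<m}" and eb: "\<beta> \<in> extensional {..d}"
      using ab by (auto simp: DomK_def PiE_def)
    have "restrict (\<lambda>a. g a k) {..<m} = \<alpha> \<longleftrightarrow> (\<forall>a<m. g a k = \<alpha> a)"
      using ea by (auto simp: fun_eq_iff restrict_def extensional_def)
    moreover have "restrict (\<lambda>b. h b k) {..d} = \<beta> \<longleftrightarrow> (\<forall>b\<le>d. h b k = \<beta> b)"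
      using eb by (auto simp: fun_eq_iff restrict_def extensional_def)
    ultimately show ?thesis using g hOm by (auto simp: tr_def Cyl_def)
  qed
  finally show ?thesis .
qed

lemma HC_sub_P1:
  assumes p: "p > 1" and k: "k \<ge> 1" and ab: "(\<alpha>, \<beta>) \<in> DomK p m d k"
  shows "Cyl p {..d} k \<beta> \<subseteq> P1 p d"
proof
  fix h assume h: "h \<in> Cyl p {..d} k \<beta>"
  have "zp_red (h b) = (if b = 0 then 1 else 0)" if b: "b \<le> d" for b
  proof -
    have hb: "h b \<in> Zp p" using h b by (auto simp: Cyl_def Om_def)
    have "\<beta> \<in> PiE {..d} (\<lambda>b. Rk p k (if b = 0 then 1 else 0))" using ab by (simp add: DomK_def)
    then have "\<beta> b \<in> Rk p k (if b = 0 then 1 else 0)" by (rule PiE_mem) (simp add: b)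
    moreover have "h b 1 = \<beta> b mod int p" using Zp_compat[OF hb k] h b by (simp add: Cyl_def)
    ultimately show ?thesis using p by (auto simp: Rk_def zp_red_def)
  qed
  then show "h \<in> P1 p d" using h by (auto simp: P1_def space_poly_le Cyl_def)
qed

lemma Cyl_nonempty:
  assumes p: "p > 1" and c: "\<And>j. j \<in> I \<Longrightarrow> 0 \<le> c j \<and> c j < int p ^ k"
  shows "restrict (\<lambda>j i. c j mod int p ^ i) I \<in> Cyl p I k c"
  using Zp_of_level[of p "c _" k] c p by (auto simp: Cyl_def Om_def)

theorem main_mp:
  assumes p: "p > 1" and K: "K \<ge> 1"
    and S: "S \<subseteq> P1 p d" "ldet p {..d} K S"
    and T: "T \<subseteq> Bmn p m (m + d)" "ldet p {..m + d} K T"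
    and eqv: "\<And>g h. g \<in> Om p {..<m} \<Longrightarrow> h \<in> P1 p d \<Longrightarrow> (poly_mu p m (m + d) (g, h) \<in> T \<longleftrightarrow> h \<in> S)"
  shows "mp_bij (monic_polys p m \<Otimes>\<^sub>M restrict_space (poly_le p d) S)
                (restrict_space (poly_le p (m + d)) T) (poly_mu p m (m + d))"
proof -
  let ?mu = "poly_mu p m (m + d)"
  let ?I = "{..m + d}"
  define D where "D = monic_polys p m \<Otimes>\<^sub>M restrict_space (poly_le p d) S"
  define N where "N = poly_le p (m + d)"
  have p0: "p > 0" using p by simp
  have SOm: "S \<subseteq> Om p {..d}" using S(1) P1_sub by blast
  have TOm: "T \<subseteq> Om p ?I" using T(1) Bmn_sub by blast
  have Ssets: "S \<in> sets (poly_le p d)"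
    using ldet_sets[OF _ S(2)] SOm by (simp add: poly_le_def Int_absorb2)
  have Tsets: "T \<in> sets N"
    using ldet_sets[OF _ T(2)] TOm by (simp add: N_def poly_le_def Int_absorb2)
  have spD: "space D = Om p {..<m} \<times> S"
    using SOm by (auto simp: D_def space_pair_measure space_restrict_space space_monic space_poly_le)
  have spT: "space (restrict_space N T) = T"
    using TOm by (auto simp: N_def space_restrict_space space_poly_le)
  have bij: "bij_betw ?mu (Om p {..<m} \<times> S) T"
  proof (rule bij_betw_subset[OF mu_bij[OF p]])
    show "Om p {..<m} \<times> S \<subseteq> Om p {..<m} \<times> P1 p d" using S(1) by auto
    show "?mu ` (Om p {..<m} \<times> S) = T"
    proof
      show "?mu ` (Om p {..<m} \<times> S) \<subseteq> T" using eqv S(1) by auto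
      show "T \<subseteq> ?mu ` (Om p {..<m} \<times> S)"
      proof
        fix t assume t: "t \<in> T"
        then have "t \<in> ?mu ` (Om p {..<m} \<times> P1 p d)"
          using T(1) bij_betw_imp_surj_on[OF mu_bij[OF p, of m d]] by auto
        then obtain g h where gh: "g \<in> Om p {..<m}" "h \<in> P1 p d" "t = ?mu (g, h)" by auto
        then have "h \<in> S" using eqv t by auto
        then show "t \<in> ?mu ` (Om p {..<m} \<times> S)" using gh by auto
      qed
    qed
  qed
  have measN: "?mu \<in> measurable D N"
    unfolding N_def
  proof (rule mu_meas[OF p])
    fix a k assume a: "a < m"
    have "(\<lambda>g. g a k) \<in> measurable (monic_polys p m) (count_space UNIV)"
      unfolding monic_polys_def by (rule comp_meas_PH) (simp add: a)
    then show "(\<lambda>x. fst x a k) \<in> measurable D (count_space UNIV)"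
      unfolding D_def using measurable_comp[OF measurable_fst] by (simp add: comp_def)
  next
    fix b k assume b: "b \<le> d"
    have "(\<lambda>h. h b k) \<in> measurable (restrict_space (poly_le p d) S) (count_space UNIV)"
      unfolding poly_le_def by (rule measurable_restrict_space1, rule comp_meas_PH) (simp add: b)
    then show "(\<lambda>x. snd x b k) \<in> measurable D (count_space UNIV)"
      unfolding D_def using measurable_comp[OF measurable_snd] by (simp add: comp_def)
  next
    show "?mu \<in> space D \<rightarrow> Om p ?I"
      unfolding spD using mu_in_Om[OF _ _ p] SOm by auto
  qed
  have measT: "?mu \<in> measurable D (restrict_space N T)"
    by (rule measurable_restrict_space2[OF _ measN]) (use bij spD in \<open>auto simp: bij_betw_def\<close>)
  have finD: "finite_measure D"
  proof -
    have f1: "finite_measure (monic_polys p m)"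
      unfolding monic_polys_def
      by (rule prob_space.finite_measure, rule prob_space_PiM) (simp add: haar_prob[OF p0])
    have f2: "finite_measure (restrict_space (poly_le p d) S)"
    proof (rule finite_measure_restrict_space[OF _ Ssets])
      show "finite_measure (poly_le p d)"
        unfolding poly_le_def
        by (rule prob_space.finite_measure, rule prob_space_PiM) (simp add: haar_prob[OF p0])
    qed
    show ?thesis unfolding D_def by (rule finite_measure_pair_measure[OF f2 f1])
  qed
  define M1 where "M1 = distr D N ?mu"
  define M2 where "M2 = density N (indicator T)"
  have M12: "M1 = M2"
  proof (rule measure_eqI_generator_eq_countable[OF Egen_Int_stable Egen_sub])
    show "sets M1 = sigma_sets (Om p ?I) (Egen p ?I K)"
      by (simp add: M1_def N_def poly_le_def sets_PH_gen)
    show "sets M2 = sigma_sets (Om p ?I) (Egen p ?I K)"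
      by (simp add: M2_def N_def poly_le_def sets_PH_gen)
    show "Cyl p ?I K ` PiE ?I (\<lambda>_. {0..<int p ^ K}) \<subseteq> Egen p ?I K"
      by (auto simp: Egen_def)
    show "\<Union>(Cyl p ?I K ` PiE ?I (\<lambda>_. {0..<int p ^ K})) = Om p ?I" by (rule Cyl_cover)
    show "countable (Cyl p ?I K ` PiE ?I (\<lambda>_. {0..<int p ^ K}))"
      by (rule countable_finite) (auto intro: finite_PiE)
    show "emeasure M1 a \<noteq> \<infinity>" for a
      unfolding M1_def using finite_measure.emeasure_finite[OF finite_measure.finite_measure_distr[OF finD measN]] by simp
  next
    fix X assume X: "X \<in> Egen p ?I K"
    show "emeasure M1 X = emeasure M2 X"
    proof (cases "X = {}")
      case True
      then show ?thesis by simp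
    next
      case False
      then obtain k c where Xk: "X = Cyl p ?I k c" and kK: "K \<le> k" using X by (auto simp: Egen_def)
      have k: "k \<ge> 1" using K kK by simp
      have Xsets: "X \<in> sets N" unfolding Xk N_def poly_le_def by (rule Cyl_sets) simp
      have e1: "emeasure M1 X = emeasure D (?mu -` X \<inter> space D)"
        unfolding M1_def by (rule emeasure_distr[OF measN Xsets])
      have e2: "emeasure M2 X = emeasure N (T \<inter> X)"
        unfolding M2_def by (rule emeasure_restricted[OF Tsets Xsets])
      show ?thesis
      proof (cases "restrict c ?I \<in> TgtK p m d k")
        case False
        have "?mu -` X \<inter> space D = {}"
        proof (rule ccontr)
          assume "?mu -` X \<inter> space D \<noteq> {}"
          then obtain g h where gh: "g \<in> Om p {..<m}" "h \<in> S" "?mu (g, h) \<in> X" unfolding spD by auto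
          have hP: "h \<in> P1 p d" using gh S(1) by auto
          have "restrict (\<lambda>j. ?mu (g, h) j k) ?I = restrict c ?I"
            using gh(3) by (auto simp: Xk Cyl_def restrict_def fun_eq_iff)
          moreover have "restrict (\<lambda>j. ?mu (g, h) j k) ?I \<in> TgtK p m d k"
            unfolding mu_restrict by (rule muK_maps[OF p k tr_Dom[OF p k gh(1) hP]])
          ultimately show False using False by simp
        qed
        moreover have "T \<inter> X = {}"
        proof (rule ccontr)
          assume "T \<inter> X \<noteq> {}"
          then obtain f where f: "f \<in> T" "f \<in> X" by auto
          have "restrict (\<lambda>j. f j k) ?I \<in> TgtK p m d k" using B_Tgt[OF p k] f T(1) by auto
          moreover have "restrict (\<lambda>j. f j k) ?I = restrict c ?I"
            using f(2) by (auto simp: Xk Cyl_def restrict_def fun_eq_iff)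
          ultimately show False using False by simp
        qed
        ultimately show ?thesis using e1 e2 by simp
      next
        case True
        define ab where "ab = inv_into (DomK p m d k) (muK p m d k) (restrict c ?I)"
        have abD: "ab \<in> DomK p m d k" and mab: "muK p m d k ab = restrict c ?I"
          using True muK_bij[OF p k] unfolding ab_def
          by (auto simp: bij_betw_def inv_into_into f_inv_into_f)
        obtain \<alpha> \<beta> where ab': "ab = (\<alpha>, \<beta>)" by (cases ab)
        have abD': "(\<alpha>, \<beta>) \<in> DomK p m d k" and mab': "muK p m d k (\<alpha>, \<beta>) = restrict c ?I"
          using abD mab ab' by auto
        define MC where "MC = Cyl p {..<m} k \<alpha>"
        define HC where "HC = Cyl p {..d} k \<beta>"
        have HCP1: "HC \<subseteq> P1 p d" unfolding HC_def by (rule HC_sub_P1[OF p k abD'])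
        have arng: "0 \<le> \<alpha> a \<and> \<alpha> a < int p ^ k" if "a \<in> {..<m}" for a
          using abD' that by (auto simp: DomK_def)
        have brng: "0 \<le> \<beta> b \<and> \<beta> b < int p ^ k" if "b \<in> {..d}" for b
        proof -
          have "\<beta> \<in> PiE {..d} (\<lambda>b. Rk p k (if b = 0 then 1 else 0))" using abD' by (simp add: DomK_def)
          then have "\<beta> b \<in> Rk p k (if b = 0 then 1 else 0)" by (rule PiE_mem) (use that in simp)
          then show ?thesis by (simp add: Rk_def)
        qed
        define g0 where "g0 = restrict (\<lambda>j i. \<alpha> j mod int p ^ i) {..<m}"
        define h0 where "h0 = restrict (\<lambda>j i. \<beta> j mod int p ^ i) {..d}"
        have g0: "g0 \<in> MC" unfolding MC_def g0_def by (rule Cyl_nonempty[OF p arng])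
        have h0: "h0 \<in> HC" unfolding HC_def h0_def by (rule Cyl_nonempty[OF p brng])
        have g0Om: "g0 \<in> Om p {..<m}" using g0 by (simp add: MC_def Cyl_def)
        have h0P: "h0 \<in> P1 p d" using h0 HCP1 by auto
        have im0: "?mu (g0, h0) \<in> X"
          using mu_in_Cyl_iff[OF p k g0Om h0P abD' mab'] g0 h0 by (simp add: Xk MC_def HC_def)
        have pre: "?mu -` X \<inter> space D = MC \<times> (HC \<inter> S)"
        proof
          show "?mu -` X \<inter> space D \<subseteq> MC \<times> (HC \<inter> S)"
          proof (rule subsetI)
            fix x assume x: "x \<in> ?mu -` X \<inter> space D"
            obtain g h where x': "x = (g, h)" by (cases x)
            have gh: "g \<in> Om p {..<m}" "h \<in> S" "?mu (g, h) \<in> X" using x x' unfolding spD by auto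
            have "h \<in> P1 p d" using gh S(1) by auto
            then have "g \<in> MC" "h \<in> HC"
              using mu_in_Cyl_iff[OF p k gh(1) _ abD' mab'] gh by (auto simp: Xk MC_def HC_def)
            then show "x \<in> MC \<times> (HC \<inter> S)" using x' gh by auto
          qed
          show "MC \<times> (HC \<inter> S) \<subseteq> ?mu -` X \<inter> space D"
          proof (rule subsetI)
            fix x assume x: "x \<in> MC \<times> (HC \<inter> S)"
            obtain g h where x': "x = (g, h)" by (cases x)
            have gh: "g \<in> MC" "h \<in> HC" "h \<in> S" using x x' by auto
            have gOm: "g \<in> Om p {..<m}" using gh by (simp add: MC_def Cyl_def)
            have "h \<in> P1 p d" using gh HCP1 by auto
            then have "?mu (g, h) \<in> X"
              using mu_in_Cyl_iff[OF p k gOm _ abD' mab'] gh by (simp add: Xk MC_def HC_def)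
            then show "x \<in> ?mu -` X \<inter> space D" using gOm gh x' by (auto simp: spD)
          qed
        qed
        have XB: "X \<subseteq> Bmn p m (m + d)" unfolding Xk by (rule Cyl_sub_B[OF p k True])
        have wpow: "ennreal (1 / real p) ^ (k * card {..<m}) * ennreal (1 / real p) ^ (k * card {..d})
            = ennreal (1 / real p) ^ (k * card ?I)"
          by (simp add: power_add[symmetric] algebra_simps)
        show ?thesis
        proof (cases "HC \<subseteq> S")
          case True
          have "T \<inter> X = X"
          proof -
            have "?mu (g0, h0) \<in> T" using eqv[OF g0Om h0P] h0 True by auto
            then have "\<not> (X \<inter> T = {})" using im0 by auto
            then have "X \<subseteq> T" using ldet_cyl[OF T(2) kK, of c] Xk by auto
            then show ?thesis by auto
          qed
          then have "emeasure M2 X = emeasure N X" using e2 by simp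
          also have "\<dots> = ennreal (1 / real p) ^ (k * card ?I)"
            unfolding Xk N_def poly_le_def
          proof (rule Cyl_emeasure[OF p0])
            fix j assume j: "j \<in> ?I"
            have "restrict c ?I j \<in> (if j < m then {0..<int p ^ k} else Rk p k (if j = m then 1 else 0))"
              using PiE_mem[OF \<open>restrict c ?I \<in> TgtK p m d k\<close>[unfolded TgtK_def] j] .
            then show "0 \<le> c j \<and> c j < int p ^ k" using j by (cases "j < m") (auto simp: Rk_def)
          qed simp
          finally have r2: "emeasure M2 X = ennreal (1 / real p) ^ (k * card ?I)" .
          have "emeasure M1 X = emeasure D (MC \<times> HC)" using e1 pre True by (simp add: Int_absorb2)
          also have "\<dots> = emeasure (monic_polys p m) MC * emeasure (restrict_space (poly_le p d) S) HC"
          proof -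
            interpret sigma_finite_measure "restrict_space (poly_le p d) S"
              using finite_measure_restrict_space[OF _ Ssets] prob_space.finite_measure[OF prob_space_PiM[of "{..d}" "\<lambda>_. haar_Zp p"]]
                haar_prob[OF p0] by (simp add: poly_le_def finite_measure.sigma_finite_measure)
            show ?thesis unfolding D_def
            proof (rule emeasure_pair_measure_Times)
              show "MC \<in> sets (monic_polys p m)" unfolding MC_def monic_polys_def by (rule Cyl_sets) simp
              show "HC \<in> sets (restrict_space (poly_le p d) S)"
                using True HC_def Cyl_sets[of "{..d}" p k \<beta>] Ssets SOm
                by (subst sets_restrict_space_iff) (auto simp: poly_le_def space_PH Int_absorb2)
            qed
          qed
          also have "emeasure (restrict_space (poly_le p d) S) HC = emeasure (poly_le p d) HC"
            using True Ssets SOm by (intro emeasure_restrict_space) (auto simp: space_poly_le Int_absorb2)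
          also have "emeasure (monic_polys p m) MC = ennreal (1 / real p) ^ (k * card {..<m})"
            unfolding MC_def monic_polys_def by (rule Cyl_emeasure[OF p0 _ arng]) auto
          also have "emeasure (poly_le p d) HC = ennreal (1 / real p) ^ (k * card {..d})"
            unfolding HC_def poly_le_def by (rule Cyl_emeasure[OF p0 _ brng]) auto
          finally show ?thesis using r2 wpow by simp
        next
          case False
          then have HS: "HC \<inter> S = {}" using ldet_cyl[OF S(2) kK, of \<beta>] HC_def by auto
          have "T \<inter> X = {}"
          proof -
            have "h0 \<notin> S" using HS h0 by auto
            then have "?mu (g0, h0) \<notin> T" using eqv[OF g0Om h0P] by auto
            then have "\<not> X \<subseteq> T" using im0 by auto
            then show ?thesis using ldet_cyl[OF T(2) kK, of c] Xk by auto
          qed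
          then show ?thesis using e1 e2 pre HS by simp
        qed
      qed
    qed
  qed
  have deq: "distr D (restrict_space N T) ?mu = restrict_space N T"
  proof (rule measure_eqI)
    show "sets (distr D (restrict_space N T) ?mu) = sets (restrict_space N T)" by simp
    fix A assume A: "A \<in> sets (distr D (restrict_space N T) ?mu)"
    then have A': "A \<subseteq> T" "A \<in> sets N"
      using sets_restrict_space_iff[of T N A] Tsets TOm by (auto simp: N_def space_poly_le Int_absorb2)
    have "emeasure (distr D (restrict_space N T) ?mu) A = emeasure D (?mu -` A \<inter> space D)"
      using A by (intro emeasure_distr[OF measT]) simp
    also have "\<dots> = emeasure M1 A" unfolding M1_def by (rule emeasure_distr[OF measN A'(2), symmetric])
    also have "\<dots> = emeasure M2 A" using M12 by simp
    also have "\<dots> = emeasure N (T \<inter> A)" unfolding M2_def by (rule emeasure_restricted[OF Tsets A'(2)])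
    also have "\<dots> = emeasure N A" using A'(1) by (simp add: Int_absorb1)
    also have "\<dots> = emeasure (restrict_space N T) A"
      using A'(1) Tsets TOm by (intro emeasure_restrict_space[symmetric]) (auto simp: N_def space_poly_le Int_absorb2)
    finally show "emeasure (distr D (restrict_space N T) ?mu) A = emeasure (restrict_space N T) A" .
  qed
  show ?thesis
    unfolding mp_bij_def D_def[symmetric] N_def[symmetric]
    using bij spD spT measT deq by simp
qed



section \<open>Gauss-type lemma over the integers\<close>

lemma mod_cancel_pow:
  fixes q :: int
  assumes "q \<noteq> 0"
  shows "(q ^ m * x) mod (q ^ m * y) = (q ^ m * z) mod (q ^ m * y) \<longleftrightarrow> x mod y = z mod y"
  using assms by (simp add: mod_mult_mult1)

lemma term_small:
  fixes q :: int
  assumes a: "a < m" and aj: "a \<le> j" and dv: "q ^ (j - a) dvd q ^ s * Hc"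
  shows "q ^ (j + 1) dvd q ^ (m + s) * Ga * Hc"
proof -
  obtain t where t: "q ^ s * Hc = q ^ (j - a) * t" using dv by (auto simp: dvd_def)
  have "q ^ (m + s) * Ga * Hc = q ^ m * Ga * (q ^ s * Hc)" by (simp add: power_add algebra_simps)
  also have "\<dots> = q ^ (m + (j - a)) * (Ga * t)" unfolding t by (simp add: power_add algebra_simps)
  finally have e: "q ^ (m + s) * Ga * Hc = q ^ (m + (j - a)) * (Ga * t)" .
  have "j + 1 \<le> m + (j - a)" using a aj by simp
  then have "q ^ (j + 1) dvd q ^ (m + (j - a))" by (rule le_imp_power_dvd)
  then show ?thesis unfolding e by simp
qed

definition CH :: "int \<Rightarrow> nat \<Rightarrow> nat \<Rightarrow> (nat \<Rightarrow> int) \<Rightarrow> nat \<Rightarrow> bool" where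
  "CH q s d \<beta> b \<longleftrightarrow> (q ^ s * \<beta> b) mod q ^ (b + 1) = ((if b = d then 1 else 0) * q ^ b) mod q ^ (b + 1)"

lemma CH_dvd:
  assumes "CH q s d \<beta> b"
  shows "q ^ b dvd q ^ s * \<beta> b"
proof -
  have "q ^ (b + 1) dvd q ^ s * \<beta> b - (if b = d then 1 else 0) * q ^ b"
    using assms unfolding CH_def by (simp only: mod_eq_dvd_iff)
  then have "q ^ b dvd q ^ s * \<beta> b - (if b = d then 1 else 0) * q ^ b"
    by (rule dvd_trans[rotated]) (simp add: le_imp_power_dvd)
  then show ?thesis by (metis diff_add_cancel dvd_add dvd_triv_right)
qed

lemma coeff_GH_sum:
  "coeff (GP m \<alpha> * HP d \<beta>) j = (\<Sum>a\<le>j. coeff (GP m \<alpha>) a * coeff (HP d \<beta>) (j - a))"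
  by (simp add: coeff_mult)

lemma sum_single_mod:
  fixes t :: "nat \<Rightarrow> int"
  assumes "m \<le> j" "\<And>a. a \<le> j \<Longrightarrow> a \<noteq> m \<Longrightarrow> Q dvd t a"
  shows "(\<Sum>a\<le>j. t a) mod Q = t m mod Q"
proof -
  have "(\<Sum>a\<le>j. t a) mod Q = (\<Sum>a\<le>j. if a = m then t m else 0) mod Q"
    by (rule sum_mod_cong) (use assms(2) in \<open>auto simp: dvd_eq_mod_eq_0\<close>)
  also have "\<dots> = t m mod Q" using assms(1) by simp
  finally show ?thesis .
qed

lemma sum_zero_mod:
  fixes t :: "nat \<Rightarrow> int"
  assumes "\<And>a. a \<le> j \<Longrightarrow> Q dvd t a"
  shows "(\<Sum>a\<le>j. t a) mod Q = 0"
proof -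
  have "Q dvd (\<Sum>a\<le>j. t a)" by (rule dvd_sum) (use assms in auto)
  then show ?thesis by simp
qed

lemma gauss_int:
  fixes q :: int and m s d :: nat and \<alpha> \<beta> :: "nat \<Rightarrow> int"
  assumes q: "q \<noteq> 0"
  defines "F j \<equiv> q ^ (m + s) * coeff (GP m \<alpha> * HP d \<beta>) j"
  shows "(\<forall>j\<le>m + d. F j mod q ^ (j + 1) = ((if j = m + d then 1 else 0) * q ^ j) mod q ^ (j + 1))
     \<longleftrightarrow> (\<forall>b\<le>d. CH q s d \<beta> b)"
proof -
  have Fs: "F j = (\<Sum>a\<le>j. q ^ (m + s) * coeff (GP m \<alpha>) a * coeff (HP d \<beta>) (j - a))" for j
    unfolding F_def coeff_GH_sum by (simp add: sum_distrib_left mult.assoc)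
  \<comment> \<open>terms with a < m vanish modulo q^(j+1) once the H-conditions above j - a hold\<close>
  have small: "q ^ (j + 1) dvd q ^ (m + s) * coeff (GP m \<alpha>) a * coeff (HP d \<beta>) (j - a)"
    if a: "a < m" "a \<le> j" and hc: "j - a \<le> d \<Longrightarrow> CH q s d \<beta> (j - a)" for a j
  proof (rule term_small[OF a])
    show "q ^ (j - a) dvd q ^ s * coeff (HP d \<beta>) (j - a)"
    proof (cases "j - a \<le> d")
      case True
      then show ?thesis using CH_dvd[OF hc[OF True]] by (simp add: coeff_HP)
    next
      case False
      then show ?thesis by (simp add: coeff_HP)
    qed
  qed
  have big: "q ^ (m + s) * coeff (GP m \<alpha>) a * coeff (HP d \<beta>) (j - a) = 0" if "a > m" for a j
    using that by (simp add: coeff_GP)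
  have mid: "q ^ (m + s) * coeff (GP m \<alpha>) m * coeff (HP d \<beta>) (j - m) = q ^ m * (q ^ s * coeff (HP d \<beta>) (j - m))" for j
    by (simp add: coeff_GP power_add algebra_simps)
  show ?thesis
  proof
    assume HF: "\<forall>j\<le>m + d. F j mod q ^ (j + 1) = ((if j = m + d then 1 else 0) * q ^ j) mod q ^ (j + 1)"
    show "\<forall>b\<le>d. CH q s d \<beta> b"
    proof (intro allI impI)
      fix b assume "b \<le> d"
      then show "CH q s d \<beta> b"
      proof (induction "d - b" arbitrary: b rule: less_induct)
        case less
        define j where "j = m + b"
        have jn: "j \<le> m + d" using less.prems by (simp add: j_def)
        have "F j mod q ^ (j + 1) = q ^ m * (q ^ s * \<beta> b) mod q ^ (j + 1)"
        proof -
          have "F j mod q ^ (j + 1) = (q ^ (m + s) * coeff (GP m \<alpha>) m * coeff (HP d \<beta>) (j - m)) mod q ^ (j + 1)"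
            unfolding Fs
          proof (rule sum_single_mod)
            show "m \<le> j" by (simp add: j_def)
            fix a assume a: "a \<le> j" "a \<noteq> m"
            show "q ^ (j + 1) dvd q ^ (m + s) * coeff (GP m \<alpha>) a * coeff (HP d \<beta>) (j - a)"
            proof (cases "a < m")
              case True
              show ?thesis
              proof (rule small[OF True a(1)])
                assume jd: "j - a \<le> d"
                have "d - (j - a) < d - b" using True jd less.prems by (simp add: j_def)
                then show "CH q s d \<beta> (j - a)" using less.hyps jd by blast
              qed
            next
              case False
              then have am: "a > m" using a(2) by simp
              show ?thesis unfolding big[OF am] by simp
            qed
          qed
          then show ?thesis using less.prems by (simp add: j_def coeff_HP coeff_GP power_add mult.assoc)
        qed
        moreover have "F j mod q ^ (j + 1) = ((if j = m + d then 1 else 0) * q ^ j) mod q ^ (j + 1)"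
          using HF jn by blast
        ultimately have "q ^ m * (q ^ s * \<beta> b) mod (q ^ m * q ^ (b + 1))
            = q ^ m * ((if b = d then 1 else 0) * q ^ b) mod (q ^ m * q ^ (b + 1))"
          by (simp add: j_def power_add algebra_simps)
        then show ?case unfolding CH_def mod_cancel_pow[OF q] .
      qed
    qed
  next
    assume HH: "\<forall>b\<le>d. CH q s d \<beta> b"
    show "\<forall>j\<le>m + d. F j mod q ^ (j + 1) = ((if j = m + d then 1 else 0) * q ^ j) mod q ^ (j + 1)"
    proof (intro allI impI)
      fix j assume jn: "j \<le> m + d"
      show "F j mod q ^ (j + 1) = ((if j = m + d then 1 else 0) * q ^ j) mod q ^ (j + 1)"
      proof (cases "m \<le> j")
        case False
        have "F j mod q ^ (j + 1) = 0"
          unfolding Fs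
        proof (rule sum_zero_mod)
          fix a assume a: "a \<le> j"
          then have "a < m" using False by simp
          then show "q ^ (j + 1) dvd q ^ (m + s) * coeff (GP m \<alpha>) a * coeff (HP d \<beta>) (j - a)"
            by (rule small[OF _ a]) (use HH in auto)
        qed
        moreover have "j \<noteq> m + d" using False by simp
        ultimately show ?thesis by simp
      next
        case True
        have "F j mod q ^ (j + 1) = (q ^ (m + s) * coeff (GP m \<alpha>) m * coeff (HP d \<beta>) (j - m)) mod q ^ (j + 1)"
          unfolding Fs
        proof (rule sum_single_mod[OF True])
          fix a assume a: "a \<le> j" "a \<noteq> m"
          show "q ^ (j + 1) dvd q ^ (m + s) * coeff (GP m \<alpha>) a * coeff (HP d \<beta>) (j - a)"
          proof (cases "a < m")
            case True
            then show ?thesis by (rule small[OF _ a(1)]) (use HH in auto)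
          next
            case False
            then have am: "a > m" using a(2) by simp
            show ?thesis unfolding big[OF am] by simp
          qed
        qed
        also have "\<dots> = q ^ m * (q ^ s * \<beta> (j - m)) mod (q ^ m * q ^ (j - m + 1))"
        proof -
          have e: "q ^ m * q ^ (j - m + 1) = q ^ (j + 1)" using True by (simp add: power_add[symmetric])
          have t: "q ^ (m + s) * coeff (GP m \<alpha>) m * coeff (HP d \<beta>) (j - m) = q ^ m * (q ^ s * \<beta> (j - m))"
            using True jn by (simp add: coeff_GP coeff_HP power_add mult.assoc)
          show ?thesis by (simp only: e t)
        qed
        also have "\<dots> = q ^ m * ((if j - m = d then 1 else 0) * q ^ (j - m)) mod (q ^ m * q ^ (j - m + 1))"
          unfolding mod_cancel_pow[OF q] using HH True jn by (simp add: CH_def)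
        also have "\<dots> = ((if j = m + d then 1 else 0) * q ^ j) mod q ^ (j + 1)"
          using True by (auto simp: power_add[symmetric] algebra_simps)
        finally show ?thesis .
      qed
    qed
  qed
qed



lemma zp_mult_of_int: "zp_mult p (zp_of_int p a) c = (\<lambda>k. (a * c k) mod int p ^ k)"
  by (simp add: zp_mult_def zp_of_int_def fun_eq_iff mod_mult_left_eq)

lemma scaled_char:
  assumes p: "p > 1" and x: "x \<in> Zp p" and dl: "\<delta> = 0 \<or> \<delta> = 1"
  shows "(\<exists>c. c \<in> Zp p \<and> zp_mult p (zp_of_int p (int p ^ j)) c = zp_mult p (zp_of_int p (int p ^ r)) x \<and> zp_red c = \<delta>)
     \<longleftrightarrow> (int p ^ r * x (j + 1)) mod int p ^ (j + 1) = (\<delta> * int p ^ j) mod int p ^ (j + 1)"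
    (is "?L \<longleftrightarrow> ?R")
proof
  let ?q = "int p"
  have q1: "?q > 1" using p by simp
  have qj0: "?q ^ j \<noteq> 0" using p by simp
  have dmod: "\<delta> mod ?q = \<delta>" using dl q1 by auto
  assume ?L
  then obtain c where c: "c \<in> Zp p" "zp_mult p (zp_of_int p (?q ^ j)) c = zp_mult p (zp_of_int p (?q ^ r)) x" "zp_red c = \<delta>"
    by blast
  have ce: "(?q ^ j * c k) mod ?q ^ k = (?q ^ r * x k) mod ?q ^ k" for k
    using fun_cong[OF c(2), of k] by (simp add: zp_mult_of_int)
  have c1: "c (j + 1) mod ?q = \<delta>"
  proof -
    have h1: "c 1 = c (j + 1) mod ?q ^ 1" by (rule Zp_compat[OF c(1)]) simp
    have h2: "c 1 = \<delta>" using c(3) unfolding zp_red_def .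
    show ?thesis using h1 h2 by (metis power_one_right)
  qed
  have "(?q ^ r * x (j + 1)) mod ?q ^ (j + 1) = (?q ^ j * c (j + 1)) mod (?q ^ j * ?q)"
    using ce[of "j + 1"] by (simp add: power_Suc2 mult.commute)
  also have "\<dots> = ?q ^ j * \<delta>" by (simp only: mod_mult_mult1 c1)
  also have "\<dots> = (\<delta> * ?q ^ j) mod (?q ^ j * ?q)" by (simp add: mod_mult_mult1 dmod mult.commute)
  finally show ?R by (simp add: power_Suc2)
next
  let ?q = "int p"
  have q1: "?q > 1" using p by simp
  have qj0: "?q ^ j \<noteq> 0" using p by simp
  have dmod: "\<delta> mod ?q = \<delta>" using dl q1 by auto
  assume R: ?R
  have xc: "x l = x L mod ?q ^ l" if "l \<le> L" for l L using Zp_compat[OF x that] .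
  have dv: "?q ^ j dvd ?q ^ r * x (k + j)" if k: "k \<ge> 1" for k
  proof -
    have "(?q ^ r * x (k + j)) mod ?q ^ (j + 1) = (?q ^ r * x (j + 1)) mod ?q ^ (j + 1)"
      using xc[of "j + 1" "k + j"] k by (simp add: mod_mult_right_eq[of "?q ^ r" "x (k + j)", symmetric])
    also have "\<dots> = (\<delta> * ?q ^ j) mod ?q ^ (j + 1)" by (rule R)
    finally have "?q ^ (j + 1) dvd ?q ^ r * x (k + j) - \<delta> * ?q ^ j" by (simp only: mod_eq_dvd_iff)
    then have "?q ^ j dvd ?q ^ r * x (k + j) - \<delta> * ?q ^ j"
      by (rule dvd_trans[rotated]) (simp add: le_imp_power_dvd)
    then show ?thesis by (metis diff_add_cancel dvd_add dvd_triv_right)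
  qed
  define b where "b k = (?q ^ r * x (k + j)) div ?q ^ j" for k
  have eb: "?q ^ j * b k = ?q ^ r * x (k + j)" if "k \<ge> 1" for k
    using dv[OF that] unfolding b_def by simp
  define c where "c k = b k mod ?q ^ k" for k
  have bcomp: "b (Suc k) mod ?q ^ k = b k mod ?q ^ k" if k: "k \<ge> 1" for k
  proof -
    have "x (k + j) = x (Suc k + j) mod ?q ^ (k + j)" using xc[of "k + j" "Suc k + j"] by simp
    then have "(?q ^ r * x (Suc k + j)) mod ?q ^ (k + j) = (?q ^ r * x (k + j)) mod ?q ^ (k + j)"
      by (metis mod_mult_right_eq)
    then have "(?q ^ j * b (Suc k)) mod (?q ^ j * ?q ^ k) = (?q ^ j * b k) mod (?q ^ j * ?q ^ k)"
      using eb[of k] eb[of "Suc k"] k by (simp add: power_add mult.commute)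
    then show ?thesis using p by (simp add: mod_mult_mult1 qj0)
  qed
  have cZ: "c \<in> Zp p"
    unfolding Zp_def mem_Collect_eq
  proof (intro allI conjI)
    fix k
    show "0 \<le> c k" "c k < ?q ^ k" using q1 by (auto simp: c_def)
    show "c k = c (Suc k) mod ?q ^ k"
    proof (cases "k = 0")
      case True then show ?thesis by (simp add: c_def)
    next
      case False
      have dvk: "?q ^ k dvd ?q * ?q ^ k" by simp
      show ?thesis using bcomp[of k] False unfolding c_def by (simp add: mod_mod_cancel[OF dvk])
    qed
  qed
  have ceq: "zp_mult p (zp_of_int p (?q ^ j)) c = zp_mult p (zp_of_int p (?q ^ r)) x"
    unfolding zp_mult_of_int
  proof (rule ext)
    fix k
    show "(?q ^ j * c k) mod ?q ^ k = (?q ^ r * x k) mod ?q ^ k"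
    proof (cases "k = 0")
      case True then show ?thesis by simp
    next
      case False
      have "(?q ^ j * c k) mod ?q ^ k = (?q ^ j * b k) mod ?q ^ k"
        unfolding c_def by (simp add: mod_mult_right_eq)
      also have "\<dots> = (?q ^ r * x (k + j)) mod ?q ^ k" using eb[of k] False by simp
      also have "\<dots> = (?q ^ r * x k) mod ?q ^ k"
        using xc[of k "k + j"] by (metis le_add1 mod_mult_right_eq)
      finally show ?thesis .
    qed
  qed
  have "zp_red c = \<delta>"
  proof -
    have "(?q ^ j * b 1) mod (?q ^ j * ?q) = (\<delta> * ?q ^ j) mod (?q ^ j * ?q)"
      using eb[of 1] R by (simp add: power_Suc2 mult.commute)
    then have "?q ^ j * (b 1 mod ?q) = ?q ^ j * \<delta>"
      by (simp add: mod_mult_mult1 dmod mult.commute)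
    then have "b 1 mod ?q = \<delta>" using qj0 p by simp
    then show ?thesis by (simp add: zp_red_def c_def)
  qed
  then show ?L using cZ ceq by blast
qed



definition scond :: "nat \<Rightarrow> nat \<Rightarrow> nat \<Rightarrow> (nat \<Rightarrow> nat \<Rightarrow> int) \<Rightarrow> bool" where
  "scond p r D f \<longleftrightarrow> (\<forall>j\<le>D. (int p ^ r * f j (j + 1)) mod int p ^ (j + 1)
       = ((if j = D then 1 else 0) * int p ^ j) mod int p ^ (j + 1))"

lemma scaled_iff:
  assumes p: "p > 1" and f: "\<And>j. j \<le> D \<Longrightarrow> f j \<in> Zp p"
  shows "scaled_cond p r D f \<longleftrightarrow> scond p r D f"
proof -
  let ?P = "\<lambda>j c. c \<in> Zp p \<and> zp_mult p (zp_of_int p (int p ^ j)) c = zp_mult p (zp_of_int p (int p ^ r)) (f j)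
              \<and> zp_red c = (if j = D then 1 else 0)"
  have "scaled_cond p r D f \<longleftrightarrow> (\<exists>c. \<forall>j\<le>D. ?P j (c j))" by (simp add: scaled_cond_def)
  also have "\<dots> \<longleftrightarrow> (\<forall>j\<le>D. \<exists>c. ?P j c)"
  proof
    assume "\<forall>j\<le>D. \<exists>c. ?P j c"
    then have "\<forall>j. \<exists>c. j \<le> D \<longrightarrow> ?P j c" by blast
    then obtain c where "\<forall>j. j \<le> D \<longrightarrow> ?P j (c j)" by metis
    then show "\<exists>c. \<forall>j\<le>D. ?P j (c j)" by blast
  qed blast
  also have "\<dots> \<longleftrightarrow> scond p r D f"
    unfolding scond_def
  proof (intro all_cong imp_cong refl)
    fix j assume "j \<le> D"
    then show "(\<exists>c. ?P j c) \<longleftrightarrow> (int p ^ r * f j (j + 1)) mod int p ^ (j + 1)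
       = ((if j = D then 1 else 0) * int p ^ j) mod int p ^ (j + 1)"
      using scaled_char[OF p f, of j "if j = D then 1 else 0" j r] by simp
  qed
  finally show ?thesis .
qed

lemma ldet_lower:
  assumes "\<And>f f'. f \<in> Om p I \<Longrightarrow> f' \<in> Om p I \<Longrightarrow> (\<forall>j\<in>I. \<forall>l\<le>K. f j l = f' j l) \<Longrightarrow> f \<in> T \<Longrightarrow> f' \<in> T"
  shows "ldet p I K T"
  unfolding ldet_def
proof (intro ballI impI)
  fix f f' assume f: "f \<in> Om p I" "f' \<in> Om p I" and eq: "\<forall>j\<in>I. f j K = f' j K"
  have all: "\<forall>j\<in>I. \<forall>l\<le>K. f j l = f' j l"
  proof (intro ballI allI impI)
    fix j l assume j: "j \<in> I" and l: "l \<le> K"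
    have "f j l = f j K mod int p ^ l" "f' j l = f' j K mod int p ^ l"
      using Zp_compat[of "f j" p l K] Zp_compat[of "f' j" p l K] f j l by (auto simp: Om_def)
    then show "f j l = f' j l" using eq j by simp
  qed
  moreover have "\<forall>j\<in>I. \<forall>l\<le>K. f' j l = f j l" using all by simp
  ultimately show "f \<in> T \<longleftrightarrow> f' \<in> T" using assms f by blast
qed

lemma scond_cong:
  assumes "\<forall>j\<le>D. f j (j + 1) = f' j (j + 1)"
  shows "scond p r D f \<longleftrightarrow> scond p r D f'"
  using assms by (simp add: scond_def)

lemma ldet_Sb:
  assumes p: "p > 1" and dK: "d + 1 \<le> K"
  shows "ldet p {..d} K {h \<in> P1 p d. scaled_cond p s d h}"
proof (rule ldet_lower)
  fix f f' assume f: "f \<in> Om p {..d}" "f' \<in> Om p {..d}" and eq: "\<forall>j\<in>{..d}. \<forall>l\<le>K. f j l = f' j l"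
    and fT: "f \<in> {h \<in> P1 p d. scaled_cond p s d h}"
  have fz: "\<And>j. j \<le> d \<Longrightarrow> f j \<in> Zp p" "\<And>j. j \<le> d \<Longrightarrow> f' j \<in> Zp p" using f by (auto simp: Om_def)
  have "f' \<in> P1 p d"
    using fT f eq dK by (auto simp: P1_def space_poly_le zp_red_def)
  moreover have "scond p s d f'"
    using fT scaled_iff[OF p fz(1)] scond_cong[of d f' f] eq dK by auto
  ultimately show "f' \<in> {h \<in> P1 p d. scaled_cond p s d h}" using scaled_iff[OF p fz(2)] by auto
qed

lemma ldet_Tb:
  assumes p: "p > 1" and K: "m + d + 1 \<le> K"
  shows "ldet p {..m + d} K {f \<in> Bmn p m (m + d). scaled_cond p r (m + d) f}"
proof (rule ldet_lower)
  fix f f' assume f: "f \<in> Om p {..m + d}" "f' \<in> Om p {..m + d}" and eq: "\<forall>j\<in>{..m + d}. \<forall>l\<le>K. f j l = f' j l"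
    and fT: "f \<in> {f \<in> Bmn p m (m + d). scaled_cond p r (m + d) f}"
  have fz: "\<And>j. j \<le> m + d \<Longrightarrow> f j \<in> Zp p" "\<And>j. j \<le> m + d \<Longrightarrow> f' j \<in> Zp p" using f by (auto simp: Om_def)
  have "f' \<in> Bmn p m (m + d)"
    using fT f eq K by (auto simp: Bmn_def space_poly_le zp_red_def)
  moreover have "scond p r (m + d) f'"
    using fT scaled_iff[OF p fz(1)] scond_cong[of "m + d" f' f] eq K by auto
  ultimately show "f' \<in> {f \<in> Bmn p m (m + d). scaled_cond p r (m + d) f}" using scaled_iff[OF p fz(2)] by auto
qed

lemma ldet_P1: "ldet p {..d} 1 (P1 p d)"
  by (rule ldet_lower) (auto simp: P1_def space_poly_le zp_red_def)

lemma ldet_B: "ldet p {..m + d} 1 (Bmn p m (m + d))"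
  by (rule ldet_lower) (auto simp: Bmn_def space_poly_le zp_red_def)

lemma mod_level:
  assumes "x \<in> Zp p" "l \<le> L"
  shows "(a * x l) mod int p ^ l = (a * x L) mod int p ^ l"
  using Zp_compat[OF assms] by (metis mod_mult_right_eq)

lemma gauss_mu:
  assumes p: "p > 1" and g: "g \<in> Om p {..<m}" and h: "h \<in> Om p {..d}" and r: "m \<le> r"
  shows "scond p r (m + d) (poly_mu p m (m + d) (g, h)) \<longleftrightarrow> scond p (r - m) d h"
proof -
  let ?q = "int p"
  define L where "L = m + d + 1"
  define \<alpha> where "\<alpha> = (\<lambda>a. g a L)"
  define \<beta> where "\<beta> = (\<lambda>b. h b L)"
  define s where "s = r - m"
  have rs: "r = m + s" using r by (simp add: s_def)
  have q0: "?q \<noteq> 0" using p by simp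
  let ?F = "poly_mu p m (m + d) (g, h)"
  have FOm: "?F \<in> Om p {..m + d}" by (rule mu_in_Om[OF g h p])
  have lhs: "(?q ^ r * ?F j (j + 1)) mod ?q ^ (j + 1) = (?q ^ (m + s) * coeff (GP m \<alpha> * HP d \<beta>) j) mod ?q ^ (j + 1)"
    if j: "j \<le> m + d" for j
  proof -
    have Fz: "?F j \<in> Zp p" using FOm j by (auto simp: Om_def)
    have "(?q ^ r * ?F j (j + 1)) mod ?q ^ (j + 1) = (?q ^ r * ?F j L) mod ?q ^ (j + 1)"
      using j by (intro mod_level[OF Fz]) (simp add: L_def)
    also have "\<dots> = (?q ^ r * (coeff (GP m \<alpha> * HP d \<beta>) j mod ?q ^ L)) mod ?q ^ (j + 1)"
      using mu_coeff[OF j, of p g h L] by (simp add: \<alpha>_def \<beta>_def)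
    also have "\<dots> = (?q ^ r * coeff (GP m \<alpha> * HP d \<beta>) j) mod ?q ^ (j + 1)"
    proof -
      have dv: "?q ^ (j + 1) dvd ?q ^ L" using j by (intro le_imp_power_dvd) (simp add: L_def)
      show ?thesis
        by (metis mod_mult_right_eq mod_mod_cancel[OF dv])
    qed
    finally show ?thesis by (simp add: rs)
  qed
  have rhs: "(?q ^ s * h b (b + 1)) mod ?q ^ (b + 1) = (?q ^ s * \<beta> b) mod ?q ^ (b + 1)"
    if b: "b \<le> d" for b
  proof -
    have hz: "h b \<in> Zp p" using h b by (auto simp: Om_def)
    show ?thesis unfolding \<beta>_def by (rule mod_level[OF hz]) (use b in \<open>simp add: L_def\<close>)
  qed
  have "scond p r (m + d) ?F \<longleftrightarrow>
      (\<forall>j\<le>m + d. (?q ^ (m + s) * coeff (GP m \<alpha> * HP d \<beta>) j) mod ?q ^ (j + 1)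
          = ((if j = m + d then 1 else 0) * ?q ^ j) mod ?q ^ (j + 1))"
    unfolding scond_def using lhs by simp
  also have "\<dots> \<longleftrightarrow> (\<forall>b\<le>d. CH ?q s d \<beta> b)" by (rule gauss_int[OF q0])
  also have "\<dots> \<longleftrightarrow> scond p (r - m) d h"
    unfolding scond_def CH_def s_def[symmetric] using rhs by simp
  finally show ?thesis .
qed



theorem lemma2p9:
  fixes p m n :: nat
  assumes "prime p" and "m \<le> n"
  shows "mp_bij (monic_polys p m \<Otimes>\<^sub>M restrict_space (poly_le p (n - m)) (P1 p (n - m)))
                (restrict_space (poly_le p n) (Bmn p m n))
                (poly_mu p m n)
       \<and> (\<forall>r::nat. m \<le> r \<and> r \<le> n \<longrightarrow>
            mp_bij (monic_polys p m \<Otimes>\<^sub>M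
                      restrict_space (poly_le p (n - m)) {h \<in> P1 p (n - m). scaled_cond p (r - m) (n - m) h})
                   (restrict_space (poly_le p n) {f \<in> Bmn p m n. scaled_cond p r n f})
                   (poly_mu p m n))"
proof -
  have p: "p > 1" using assms(1) by (rule prime_gt1)
  obtain d where n: "n = m + d" using assms(2) le_Suc_ex by blast
  have nm: "n - m = d" by (simp add: n)
  have inB: "poly_mu p m (m + d) (g, h) \<in> Bmn p m (m + d)" if "g \<in> Om p {..<m}" "h \<in> P1 p d" for g h
    using bij_betw_imp_surj_on[OF mu_bij[OF p, of m d]] that by blast
  have A: "mp_bij (monic_polys p m \<Otimes>\<^sub>M restrict_space (poly_le p d) (P1 p d))
                (restrict_space (poly_le p (m + d)) (Bmn p m (m + d))) (poly_mu p m (m + d))"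
    by (rule main_mp[OF p order_refl order_refl ldet_P1 order_refl ldet_B]) (use inB in auto)
  have B: "mp_bij (monic_polys p m \<Otimes>\<^sub>M
                      restrict_space (poly_le p d) {h \<in> P1 p d. scaled_cond p (r - m) d h})
                   (restrict_space (poly_le p (m + d)) {f \<in> Bmn p m (m + d). scaled_cond p r (m + d) f})
                   (poly_mu p m (m + d))" if r: "m \<le> r" for r
  proof (rule main_mp[OF p _ _ ldet_Sb[OF p] _ ldet_Tb[OF p]])
    show "1 \<le> m + d + 1" "d + 1 \<le> m + d + 1" "m + d + 1 \<le> m + d + 1" by simp_all
    show "{h \<in> P1 p d. scaled_cond p (r - m) d h} \<subseteq> P1 p d" by auto
    show "{f \<in> Bmn p m (m + d). scaled_cond p r (m + d) f} \<subseteq> Bmn p m (m + d)" by auto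
    fix g h assume g: "g \<in> Om p {..<m}" and h: "h \<in> P1 p d"
    have hOm: "h \<in> Om p {..d}" using h P1_sub by auto
    have FOm: "poly_mu p m (m + d) (g, h) \<in> Om p {..m + d}" by (rule mu_in_Om[OF g hOm p])
    have "scaled_cond p r (m + d) (poly_mu p m (m + d) (g, h)) \<longleftrightarrow> scond p r (m + d) (poly_mu p m (m + d) (g, h))"
      by (rule scaled_iff[OF p]) (use FOm in \<open>auto simp: Om_def\<close>)
    also have "\<dots> \<longleftrightarrow> scond p (r - m) d h" by (rule gauss_mu[OF p g hOm r])
    also have "\<dots> \<longleftrightarrow> scaled_cond p (r - m) d h"
      by (rule scaled_iff[OF p, symmetric]) (use hOm in \<open>auto simp: Om_def\<close>)
    finally show "poly_mu p m (m + d) (g, h) \<in> {f \<in> Bmn p m (m + d). scaled_cond p r (m + d) f}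
        \<longleftrightarrow> h \<in> {h \<in> P1 p d. scaled_cond p (r - m) d h}"
      using inB[OF g h] h by auto
  qed
  show ?thesis unfolding nm unfolding n using A B by blast
qed

end
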